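(* Let $0<p<\infty$ and $\phi$ be an Orlicz function with $\alpha_\phi>0$. Then the following conditions are equivalent: (i) the Orlicz space $L_\phi$ is $p$-convex; (ii) $L_\phi$ satisfies an upper $p$-estimate; (iii) $\phi$ satisfies condition $\Delta^{*p}$.
   Context: Let $(\Omega,\Sigma,\mu)$ be a $\sigma$-finite measure space which is either non-atomic with $\mu(\Omega)=\infty$, or non-atomic with $\mu(\Omega)<\infty$, or $\mathbb{N}$ with counting measure. An Orlicz function is $\phi:\mathbb{R}_+\to\mathbb{R}_+$ with $\phi(0)=0$, strictly increasing, continuous, $\lim_{u\to\infty}\phi(u)=\infty$. The Orlicz space $L_\phi$ is the set of measurable $f$ with $\int_\Omega\phi(\lambda|f|)\,d\mu<\infty$ for some $\lambda>0$, equipped with $\|f\|=\inf\{\varepsilon>0:\int_\Omega\phi(|f|/\varepsilon)\,d\mu\le1\}$. The lower Matuszewska–Orlicz index is $\alpha_\phi=\sup\{p\in\mathbb{R}: \exists c>0$ with $\phi(au)\ge ca^p\phi(u)$ for all $a\ge1$ and all relevant $u\}$; the assumption $\alpha_\phi>0$ is equivalent to $\|\cdot\|$ being a quasi-norm, so $L_\phi$ is a quasi-Banach lattice. $L_\phi$ is $p$-convex if there is $C_p>0$ with $\|(\sum_{i=1}^n|f_i|^p)^{1/p}\|\le C_p(\sum_{i=1}^n\|f_i\|^p)^{1/p}$ for all $f_1,\dots,f_n\in L_\phi$; it satisfies an upper $p$-estimate if this inequality holds for all disjointly supported $f_1,\dots,f_n$. $\phi$ satisfies $\Delta^{*p}$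 if there is $K>0$ with $\phi(au)\ge Ka^p\phi(u)$ for all $a\ge1$ and $u\ge0$ (for all arguments), resp. $u\ge v$ for some $v\ge0$ (large arguments), resp. $au\le v$ for some $v>0$ (small arguments). Convention: the versions for all arguments, large arguments, and small arguments (of $\Delta^{*p}$ and of the index) are used when $\mu$ is non-atomic infinite, non-atomic finite, and counting measure on $\mathbb{N}$, respectively. *)

theory Defs
  imports "HOL-Analysis.Analysis"
begin

text \<open>Orlicz functions (only their values on [0,\<infinity>) matter).\<close>
definition orlicz_function :: "(real \<Rightarrow> real) \<Rightarrow> bool" where
  "orlicz_function \<phi> \<longleftrightarrow>
     \<phi> 0 = 0 \<and> (\<forall>u\<ge>0. \<phi> u \<ge> 0) \<and> strict_mono_on {0..} \<phi> \<and>
     continuous_on {0..} \<phi> \<and> filterlim \<phi> at_top at_top"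

definition nonatomic :: "'a measure \<Rightarrow> bool" where
  "nonatomic M \<longleftrightarrow> (\<forall>A\<in>sets M. emeasure M A > 0 \<longrightarrow>
       (\<exists>B\<in>sets M. B \<subseteq> A \<and> 0 < emeasure M B \<and> emeasure M B < emeasure M A))"

datatype regime = All_Args | Large_Args | Small_Args

text \<open>Which measure space goes with which regime (convention of the paper).
  The counting measure on \<open>\<nat>\<close> is represented by counting measure on a countably infinite set.\<close>
fun measure_regime :: "'a measure \<Rightarrow> regime \<Rightarrow> bool" where
  "measure_regime M All_Args \<longleftrightarrow> nonatomic M \<and> emeasure M (space M) = \<infinity>"
| "measure_regime M Large_Args \<longleftrightarrow> nonatomic M \<and> 0 < emeasure M (space M) \<and> emeasure M (space M) < \<infinity>"
| "measure_regime M Small_Args \<longleftrightarrow> M = count_space (space M) \<and>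
       (\<exists>g::nat \<Rightarrow> 'a. bij_betw g UNIV (space M))"

fun delta_star :: "regime \<Rightarrow> real \<Rightarrow> (real \<Rightarrow> real) \<Rightarrow> bool" where
  "delta_star All_Args p \<phi> \<longleftrightarrow>
     (\<exists>K>0. \<forall>a\<ge>1. \<forall>u\<ge>0. \<phi> (a * u) \<ge> K * a powr p * \<phi> u)"
| "delta_star Large_Args p \<phi> \<longleftrightarrow>
     (\<exists>K>0. \<exists>v\<ge>0. \<forall>a\<ge>1. \<forall>u\<ge>v. \<phi> (a * u) \<ge> K * a powr p * \<phi> u)"
| "delta_star Small_Args p \<phi> \<longleftrightarrow>
     (\<exists>K>0. \<exists>v>0. \<forall>a\<ge>1. \<forall>u\<ge>0. a * u \<le> v \<longrightarrow> \<phi> (a * u) \<ge> K * a powr p * \<phi> u)"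

text \<open>Lower Matuszewska--Orlicz index (as an extended real, since the set may be unbounded).\<close>
definition lower_index :: "regime \<Rightarrow> (real \<Rightarrow> real) \<Rightarrow> ereal" where
  "lower_index r \<phi> = Sup (ereal ` {p. delta_star r p \<phi>})"

definition orlicz_space :: "'a measure \<Rightarrow> (real \<Rightarrow> real) \<Rightarrow> ('a \<Rightarrow> real) set" where
  "orlicz_space M \<phi> = {f \<in> borel_measurable M.
      \<exists>c>0. (\<integral>\<^sup>+ x. ennreal (\<phi> (c * \<bar>f x\<bar>)) \<partial>M) < \<infinity>}"

definition orlicz_norm :: "'a measure \<Rightarrow> (real \<Rightarrow> real) \<Rightarrow> ('a \<Rightarrow> real) \<Rightarrow> real" where
  "orlicz_norm M \<phi> f = Inf {\<epsilon>. \<epsilon> > 0 \<and> (\<integral>\<^sup>+ x. ennreal (\<phi> (\<bar>f x\<bar> / \<epsilon>)) \<partial>M) \<le> 1}"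

definition p_convex :: "'a measure \<Rightarrow> (real \<Rightarrow> real) \<Rightarrow> real \<Rightarrow> bool" where
  "p_convex M \<phi> p \<longleftrightarrow> (\<exists>C>0. \<forall>n. \<forall>f :: nat \<Rightarrow> 'a \<Rightarrow> real.
      (\<forall>i<n. f i \<in> orlicz_space M \<phi>) \<longrightarrow>
      orlicz_norm M \<phi> (\<lambda>x. (\<Sum>i<n. \<bar>f i x\<bar> powr p) powr (1 / p))
        \<le> C * (\<Sum>i<n. orlicz_norm M \<phi> (f i) powr p) powr (1 / p))"

definition upper_p_estimate :: "'a measure \<Rightarrow> (real \<Rightarrow> real) \<Rightarrow> real \<Rightarrow> bool" where
  "upper_p_estimate M \<phi> p \<longleftrightarrow> (\<exists>C>0. \<forall>n. \<forall>f :: nat \<Rightarrow> 'a \<Rightarrow> real.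
      (\<forall>i<n. f i \<in> orlicz_space M \<phi>) \<longrightarrow>
      (\<forall>i<n. \<forall>j<n. i \<noteq> j \<longrightarrow> (\<forall>x. f i x = 0 \<or> f j x = 0)) \<longrightarrow>
      orlicz_norm M \<phi> (\<lambda>x. (\<Sum>i<n. \<bar>f i x\<bar> powr p) powr (1 / p))
        \<le> C * (\<Sum>i<n. orlicz_norm M \<phi> (f i) powr p) powr (1 / p))"

end

theory Submission
  imports Defs
begin

lemma fin_meas_eq: "emeasure M A < \<infinity> \<Longrightarrow> emeasure M A = ennreal (measure M A)"
  by (simp add: emeasure_eq_ennreal_measure)

lemma small_subset:
  assumes na: "nonatomic M" and Z: "Z \<in> sets M" "emeasure M Z < \<infinity>" "0 < emeasure M Z" and e: "e > 0"
  shows "\<exists>B\<in>sets M. B \<subseteq> Z \<and> 0 < measure M B \<and> measure M B \<le> e"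
proof -
  have step: "\<exists>B\<in>sets M. B \<subseteq> Z \<and> 0 < measure M B \<and> measure M B \<le> measure M Z / 2^k" for k :: nat
  proof (induction k)
    case 0
    have "0 < measure M Z" using Z by (simp add: measure_def enn2real_positive_iff)
    then show ?case using Z by auto
  next
    case (Suc k)
    then obtain B where B: "B \<in> sets M" "B \<subseteq> Z" "0 < measure M B" "measure M B \<le> measure M Z / 2^k" by blast
    have B4: "measure M B * 2^k \<le> measure M Z" using B(4) by (simp add: divide_simps)
    have Bfin: "emeasure M B < \<infinity>" using B Z emeasure_mono[of B Z M] by (meson le_less_trans)
    have Bpos: "0 < emeasure M B" using B(3) Bfin fin_meas_eq[OF Bfin] by simp
    obtain C where C: "C \<in> sets M" "C \<subseteq> B" "0 < emeasure M C" "emeasure M C < emeasure M B"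
      using na B(1) Bpos unfolding nonatomic_def by blast
    have Cfin: "emeasure M C < \<infinity>" using C(4) Bfin by (rule less_trans)
    have mC: "0 < measure M C" "measure M C < measure M B"
      using C Cfin Bfin fin_meas_eq[OF Cfin] fin_meas_eq[OF Bfin]
      by (auto simp: ennreal_less_iff)
    have mD: "measure M (B - C) = measure M B - measure M C"
      using Bfin B(1) C(1,2) by (intro measure_Diff) auto
    show ?case
    proof (cases "measure M C \<le> measure M B / 2")
      case True
      have "2 * measure M C * 2^k \<le> measure M B * 2^k" using True by (intro mult_right_mono) auto
      moreover have "measure M C * 2^Suc k = 2 * measure M C * 2^k" by simp
      ultimately have "measure M C * 2^Suc k \<le> measure M Z" using B4 by linarith
      then have "measure M C \<le> measure M Z / 2^Suc k" by (simp add: divide_simps)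
      then show ?thesis using C B mC by (intro bexI[of _ C]) auto
    next
      case False
      have "2 * measure M (B - C) * 2^k \<le> measure M B * 2^k" using False mD by (intro mult_right_mono) auto
      moreover have "measure M (B - C) * 2^Suc k = 2 * measure M (B - C) * 2^k" by simp
      ultimately have "measure M (B - C) * 2^Suc k \<le> measure M Z" using B4 by linarith
      then have "measure M (B - C) \<le> measure M Z / 2^Suc k" by (simp add: divide_simps)
      then show ?thesis using C B mC mD by (intro bexI[of _ "B - C"]) auto
    qed
  qed
  obtain k :: nat where k: "measure M Z / e < 2 ^ k" using real_arch_pow[of 2 "measure M Z / e"] by auto
  then have "measure M Z < e * 2^k" using e by (simp add: pos_divide_less_eq mult.commute)
  then have "measure M Z / 2^k \<le> e" by (simp add: pos_divide_le_eq)
  moreover obtain B where "B\<in>sets M" "B \<subseteq> Z" "0 < measure M B" "measure M B \<le> measure M Z / 2^k"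
    using step[of k] by blast
  ultimately show ?thesis by (intro bexI[of _ B]) auto
qed

lemma sierpinski:
  assumes na: "nonatomic M" and Y: "Y \<in> sets M" "emeasure M Y < \<infinity>" and t: "0 \<le> t" "t \<le> measure M Y"
  shows "\<exists>A\<in>sets M. A \<subseteq> Y \<and> measure M A = t"
proof -
  have Yf: "Y \<in> fmeasurable M" using Y by (auto simp: fmeasurable_def)
  have fin: "emeasure M A < \<infinity>" if "A \<in> sets M" "A \<subseteq> Y" for A
    using that Y emeasure_mono[of A Y M] by (meson le_less_trans)
  have mmono: "measure M A \<le> measure M B" if "A \<in> sets M" "B \<in> sets M" "A \<subseteq> B" "B \<subseteq> Y" for A B
    using that fin[of B] by (intro measure_mono_fmeasurable) (auto simp: fmeasurable_def)
  define G where "G A = {measure M B | B. B \<in> sets M \<and> B \<subseteq> Y - A \<and> measure M B \<le> t - measure M A}" for A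
  define step where "step A = (SOME B. B \<in> sets M \<and> B \<subseteq> Y - A \<and> measure M B \<le> t - measure M A \<and> Sup (G A) / 2 \<le> measure M B)" for A
  have Gne: "G A \<noteq> {}" "bdd_above (G A)" if "measure M A \<le> t" for A
  proof -
    show "G A \<noteq> {}" unfolding G_def using that by (auto intro!: exI[of _ "{}"])
    show "bdd_above (G A)" unfolding G_def by (intro bdd_aboveI[of _ "t - measure M A"]) auto
  qed
  have stepok: "step A \<in> sets M \<and> step A \<subseteq> Y - A \<and> measure M (step A) \<le> t - measure M A \<and> Sup (G A) / 2 \<le> measure M (step A)"
    if mAt: "measure M A \<le> t" for A
  proof -
    have "\<exists>B. B \<in> sets M \<and> B \<subseteq> Y - A \<and> measure M B \<le> t - measure M A \<and> Sup (G A) / 2 \<le> measure M B"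
    proof (cases "Sup (G A) \<le> 0")
      case True
      then show ?thesis using mAt by (intro exI[of _ "{}"]) auto
    next
      case False
      then have "Sup (G A) / 2 < Sup (G A)" by simp
      then obtain x where "x \<in> G A" "Sup (G A) / 2 < x" using less_cSup_iff[OF Gne(1)[OF mAt] Gne(2)[OF mAt]] by blast
      then show ?thesis unfolding G_def by force
    qed
    then show ?thesis unfolding step_def by (rule someI_ex)
  qed
  define As where "As = rec_nat {} (\<lambda>k A. A \<union> step A)"
  have As0: "As 0 = {}" and AsS: "As (Suc k) = As k \<union> step (As k)" for k
    unfolding As_def by simp_all
  define b where "b k = measure M (step (As k))" for k
  have inv: "As k \<in> sets M \<and> As k \<subseteq> Y \<and> measure M (As k) \<le> t \<and> measure M (As k) = (\<Sum>j<k. b j)" for k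
  proof (induction k)
    case 0
    then show ?case using t by (simp add: As0)
  next
    case (Suc k)
    let ?A = "As k"
    have s: "step ?A \<in> sets M" "step ?A \<subseteq> Y - ?A" "measure M (step ?A) \<le> t - measure M ?A"
      using stepok[of ?A] Suc by auto
    have s4: "step ?A \<subseteq> Y" using s(2) by blast
    have "measure M (As (Suc k)) = measure M ?A + measure M (step ?A)"
      unfolding AsS using Suc s fin[of ?A] fin[OF s(1) s4]
      by (intro measure_Union) auto
    then show ?case using Suc s by (auto simp: AsS b_def)
  qed
  have bnn: "b k \<ge> 0" for k by (simp add: b_def)
  have "summable b"
    by (rule summableI_nonneg_bounded[of b t]) (use bnn in simp, metis inv)
  then have b0: "b \<longlonglongrightarrow> 0" by (rule summable_LIMSEQ_zero)
  define A where "A = (\<Union>k. As k)"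
  have inc: "incseq As" unfolding incseq_Suc_iff using AsS by auto
  have Asets: "A \<in> sets M" "A \<subseteq> Y" unfolding A_def using inv by auto
  have "emeasure M A = (SUP k. emeasure M (As k))" unfolding A_def
    using inv inc by (intro SUP_emeasure_incseq[symmetric]) auto
  also have "\<dots> \<le> ennreal t"
  proof (rule SUP_least)
    fix k
    have "emeasure M (As k) = ennreal (measure M (As k))" using fin[of "As k"] inv[of k] by (intro fin_meas_eq) auto
    then show "emeasure M (As k) \<le> ennreal t" using inv[of k] by (simp add: ennreal_leI)
  qed
  finally have "emeasure M A \<le> ennreal t" .
  then have mA: "measure M A \<le> t" using fin_meas_eq[OF fin[OF Asets]] t by (simp add: ennreal_le_iff)
  have "measure M A \<ge> t"
  proof (rule ccontr)
    assume "\<not> t \<le> measure M A"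
    then have lt: "measure M A < t" by simp
    define Z where "Z = Y - A"
    have Zs: "Z \<in> sets M" "Z \<subseteq> Y" unfolding Z_def using Y Asets by auto
    have mZ: "measure M Z = measure M Y - measure M A"
      unfolding Z_def using Y Asets by (intro measure_Diff) auto
    have "0 < measure M Z" using mZ lt t by simp
    then have Zpos: "0 < emeasure M Z" using fin_meas_eq[OF fin[OF Zs]] by simp
    obtain B where B: "B \<in> sets M" "B \<subseteq> Z" "0 < measure M B" "measure M B \<le> t - measure M A"
      using small_subset[OF na Zs(1) fin[OF Zs] Zpos, of "t - measure M A"] lt by auto
    have le: "measure M B \<le> 2 * b k" for k
    proof -
      have sub: "As k \<subseteq> A" unfolding A_def by auto
      have "measure M (As k) \<le> measure M A" using inv[of k] Asets sub by (intro mmono) auto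
      moreover have "B \<subseteq> Y - As k" using B(2) sub Z_def by blast
      ultimately have "measure M B \<in> G (As k)" unfolding G_def using B by (intro CollectI exI[of _ B]) auto
      then have "measure M B \<le> Sup (G (As k))" using Gne[of "As k"] inv[of k] by (intro cSup_upper) auto
      also have "\<dots> \<le> 2 * b k" using stepok[of "As k"] inv[of k] by (simp add: b_def)
      finally show ?thesis .
    qed
    have "eventually (\<lambda>k. b k < measure M B / 2) sequentially"
      using b0 B(3) by (intro order_tendstoD) auto
    then obtain k where "b k < measure M B / 2" by (meson eventually_sequentially order_refl)
    with le[of k] show False by simp
  qed
  with mA Asets show ?thesis by auto
qed

lemma phi_props:
  assumes "orlicz_function \<phi>"
  shows "\<phi> 0 = 0" "\<And>u. u \<ge> 0 \<Longrightarrow> \<phi> u \<ge> 0"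
    "\<And>x y. 0 \<le> x \<Longrightarrow> x \<le> y \<Longrightarrow> \<phi> x \<le> \<phi> y"
    "\<And>x y. 0 \<le> x \<Longrightarrow> x < y \<Longrightarrow> \<phi> x < \<phi> y"
    "continuous_on {0..} \<phi>" "filterlim \<phi> at_top at_top"
proof -
  have sm: "strict_mono_on {0..} \<phi>" using assms by (simp add: orlicz_function_def)
  show "\<phi> 0 = 0" "\<And>u. u \<ge> 0 \<Longrightarrow> \<phi> u \<ge> 0" "continuous_on {0..} \<phi>" "filterlim \<phi> at_top at_top"
    using assms by (auto simp: orlicz_function_def)
  show lt: "\<And>x y. 0 \<le> x \<Longrightarrow> x < y \<Longrightarrow> \<phi> x < \<phi> y"
    using sm by (auto simp: strict_mono_on_def)
  show "\<And>x y. 0 \<le> x \<Longrightarrow> x \<le> y \<Longrightarrow> \<phi> x \<le> \<phi> y"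
    using lt by (metis order_le_less)
qed

lemma phi_meas:
  assumes "orlicz_function \<phi>" "g \<in> borel_measurable M"
  shows "(\<lambda>x. \<phi> \<bar>g x\<bar>) \<in> borel_measurable M"
proof -
  have "continuous_on UNIV (\<lambda>x. \<phi> \<bar>x\<bar>)"
    by (rule continuous_on_compose2[OF phi_props(5)[OF assms(1)]]) (auto intro!: continuous_intros)
  then have "(\<lambda>x. \<phi> \<bar>x\<bar>) \<in> borel_measurable borel" by (rule borel_measurable_continuous_onI)
  from measurable_compose[OF assms(2) this] show ?thesis by simp
qed

lemma phi_meas':
  assumes "orlicz_function \<phi>" "g \<in> borel_measurable M" "\<And>x. x \<in> space M \<Longrightarrow> g x \<ge> 0"
  shows "(\<lambda>x. \<phi> (g x)) \<in> borel_measurable M"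
proof -
  have "(\<lambda>x. \<phi> \<bar>g x\<bar>) \<in> borel_measurable M" by (rule phi_meas[OF assms(1,2)])
  then show ?thesis by (rule measurable_cong[THEN iffD1, rotated]) (use assms(3) in auto)
qed

lemma phi_tendsto0:
  assumes "orlicz_function \<phi>" "(g \<longlongrightarrow> 0) F" "\<forall>\<^sub>F x in F. g x \<ge> 0"
  shows "((\<lambda>x. \<phi> (g x)) \<longlongrightarrow> 0) F"
proof -
  have "((\<lambda>x. \<phi> (g x)) \<longlongrightarrow> \<phi> 0) F"
    by (rule continuous_on_tendsto_compose[OF phi_props(5)[OF assms(1)] assms(2)]) (use assms(3) in auto)
  then show ?thesis using phi_props(1)[OF assms(1)] by simp
qed

lemma phi_small:
  assumes "orlicz_function \<phi>" "e > 0"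
  shows "\<exists>y>0. \<phi> y \<le> e"
proof -
  have "((\<lambda>k::nat. \<phi> (1 / Suc k)) \<longlongrightarrow> 0) sequentially"
    by (rule phi_tendsto0[OF assms(1)]) (auto intro!: LIMSEQ_Suc[OF lim_const_over_n] simp del: of_nat_Suc)
  then have "eventually (\<lambda>k. \<phi> (1 / Suc k) < e) sequentially" using assms(2) by (intro order_tendstoD)
  then obtain k where "\<phi> (1 / Suc k) < e" by (meson eventually_sequentially order_refl)
  then show ?thesis by (intro exI[of _ "1 / Suc k"]) auto
qed

lemma phi_large:
  assumes "orlicz_function \<phi>"
  shows "\<exists>y>0. \<phi> y \<ge> e"
proof -
  have "eventually (\<lambda>x. \<phi> x \<ge> e) at_top" using phi_props(6)[OF assms] by (simp add: filterlim_at_top)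
  then obtain N where "\<And>x. x \<ge> N \<Longrightarrow> \<phi> x \<ge> e" by (auto simp: eventually_at_top_linorder)
  then show ?thesis by (intro exI[of _ "max N 1"]) auto
qed

definition nset :: "'a measure \<Rightarrow> (real \<Rightarrow> real) \<Rightarrow> ('a \<Rightarrow> real) \<Rightarrow> real set" where
  "nset M \<phi> f = {\<epsilon>. \<epsilon> > 0 \<and> (\<integral>\<^sup>+ x. ennreal (\<phi> (\<bar>f x\<bar> / \<epsilon>)) \<partial>M) \<le> 1}"

lemma orlicz_norm_nset: "orlicz_norm M \<phi> f = Inf (nset M \<phi> f)"
  by (simp add: orlicz_norm_def nset_def)

lemma nset_nonempty:
  assumes phi: "orlicz_function \<phi>" and f: "f \<in> orlicz_space M \<phi>"
  shows "nset M \<phi> f \<noteq> {}"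
proof -
  obtain c where c: "c > 0" "(\<integral>\<^sup>+ x. ennreal (\<phi> (c * \<bar>f x\<bar>)) \<partial>M) < \<infinity>" and fm: "f \<in> borel_measurable M"
    using f by (auto simp: orlicz_space_def)
  define h where "h k x = ennreal (\<phi> (c * \<bar>f x\<bar> / Suc k))" for k x
  have hm: "h k \<in> borel_measurable M" for k
  proof -
    have "(\<lambda>x. \<phi> \<bar>c * f x / Suc k\<bar>) \<in> borel_measurable M" using fm by (intro phi_meas[OF phi]) auto
    then show ?thesis unfolding h_def using c(1) by (simp add: abs_mult)
  qed
  have dec: "h (Suc k) x \<le> h k x" for k x
    unfolding h_def using c(1)
    by (intro ennreal_leI phi_props(3)[OF phi]) (auto simp: frac_le)
  have h0: "(\<integral>\<^sup>+ x. h 0 x \<partial>M) < \<infinity>" using c by (simp add: h_def)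
  have inf0: "(INF k. h k x) = 0" for x
  proof -
    have "decseq (\<lambda>k. h k x)" using dec by (simp add: decseq_Suc_iff)
    then have "(\<lambda>k. h k x) \<longlonglongrightarrow> (INF k. h k x)" by (rule LIMSEQ_INF)
    moreover have "(\<lambda>k. h k x) \<longlonglongrightarrow> ennreal 0" unfolding h_def
    proof (intro tendsto_ennrealI phi_tendsto0[OF phi])
      show "(\<lambda>k. c * \<bar>f x\<bar> / real (Suc k)) \<longlonglongrightarrow> 0"
        by (intro LIMSEQ_Suc[OF lim_const_over_n])
      show "\<forall>\<^sub>F k in sequentially. 0 \<le> c * \<bar>f x\<bar> / real (Suc k)" using c(1) by auto
    qed
    ultimately show ?thesis using LIMSEQ_unique by fastforce
  qed
  have "(\<integral>\<^sup>+ x. (INF k. h k x) \<partial>M) = (INF k. integral\<^sup>N M (h k))"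
    by (rule nn_integral_monotone_convergence_INF_AE') (use dec hm h0 in auto)
  then have "(INF k. integral\<^sup>N M (h k)) = 0" using inf0 by simp
  then have "(INF k. integral\<^sup>N M (h k)) < 1" by simp
  then obtain k where k: "integral\<^sup>N M (h k) < 1" by (auto simp: INF_less_iff)
  have "Suc k / c \<in> nset M \<phi> f" unfolding nset_def
  proof (intro CollectI conjI)
    show "Suc k / c > 0" using c by simp
    have "(\<integral>\<^sup>+ x. ennreal (\<phi> (\<bar>f x\<bar> / (Suc k / c))) \<partial>M) = integral\<^sup>N M (h k)"
      unfolding h_def by (simp add: field_simps)
    then show "(\<integral>\<^sup>+ x. ennreal (\<phi> (\<bar>f x\<bar> / (Suc k / c))) \<partial>M) \<le> 1" using k by simp
  qed
  then show ?thesis by blast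
qed

lemma nset_upclosed:
  assumes phi: "orlicz_function \<phi>" and e: "e \<in> nset M \<phi> f" "e \<le> e'"
  shows "e' \<in> nset M \<phi> f"
proof -
  have "(\<integral>\<^sup>+ x. ennreal (\<phi> (\<bar>f x\<bar> / e')) \<partial>M) \<le> (\<integral>\<^sup>+ x. ennreal (\<phi> (\<bar>f x\<bar> / e)) \<partial>M)"
    using e by (intro nn_integral_mono ennreal_leI phi_props(3)[OF phi])
      (auto simp: nset_def intro!: divide_left_mono)
  then show ?thesis using e by (auto simp: nset_def)
qed

lemma nset_bdd: "bdd_below (nset M \<phi> f)"
  by (rule bdd_belowI[of _ 0]) (auto simp: nset_def)

lemma norm_nonneg:
  assumes "orlicz_function \<phi>" "f \<in> orlicz_space M \<phi>"
  shows "orlicz_norm M \<phi> f \<ge> 0"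
  unfolding orlicz_norm_nset using nset_nonempty[OF assms]
  by (intro cInf_greatest) (auto simp: nset_def)

lemma norm_le:
  assumes "e \<in> nset M \<phi> f"
  shows "orlicz_norm M \<phi> f \<le> e"
  unfolding orlicz_norm_nset using assms nset_bdd by (intro cInf_lower)

lemma above_norm:
  assumes phi: "orlicz_function \<phi>" and f: "f \<in> orlicz_space M \<phi>" and e: "e > orlicz_norm M \<phi> f"
  shows "e \<in> nset M \<phi> f"
proof -
  obtain e0 where "e0 \<in> nset M \<phi> f" "e0 < e"
    using e unfolding orlicz_norm_nset using cInf_lessD[OF nset_nonempty[OF phi f]] by blast
  then show ?thesis by (meson nset_upclosed[OF phi] less_imp_le)
qed

lemma ind_integral:
  assumes phi: "orlicz_function \<phi>" and A: "A \<in> sets M" and e: "e > 0"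
  shows "(\<integral>\<^sup>+ x. ennreal (\<phi> (\<bar>indicator A x :: real\<bar> / e)) \<partial>M) = ennreal (\<phi> (1 / e)) * emeasure M A"
proof -
  have "(\<integral>\<^sup>+ x. ennreal (\<phi> (\<bar>indicator A x :: real\<bar> / e)) \<partial>M) = (\<integral>\<^sup>+ x. ennreal (\<phi> (1 / e)) * indicator A x \<partial>M)"
    by (intro nn_integral_cong) (auto simp: indicator_def phi_props(1)[OF phi])
  also have "\<dots> = ennreal (\<phi> (1 / e)) * emeasure M A" using A by (rule nn_integral_cmult_indicator)
  finally show ?thesis .
qed

lemma ind_space:
  assumes phi: "orlicz_function \<phi>" and A: "A \<in> sets M" "emeasure M A < \<infinity>"
  shows "(indicator A :: 'a \<Rightarrow> real) \<in> orlicz_space M \<phi>"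
  unfolding orlicz_space_def
proof (intro CollectI conjI exI[of _ 1])
  show "(indicator A :: 'a \<Rightarrow> real) \<in> borel_measurable M" using A by simp
  have "(\<integral>\<^sup>+ x. ennreal (\<phi> (1 * \<bar>indicator A x :: real\<bar>)) \<partial>M) = ennreal (\<phi> (1 / 1)) * emeasure M A"
    using ind_integral[OF phi A(1), of 1] by simp
  then show "(\<integral>\<^sup>+ x. ennreal (\<phi> (1 * \<bar>indicator A x :: real\<bar>)) \<partial>M) < \<infinity>"
    using A(2) by (simp add: ennreal_mult_less_top)
qed simp

lemma ind_norm_upper:
  assumes phi: "orlicz_function \<phi>" and A: "A \<in> sets M" "emeasure M A = ennreal s" "s \<ge> 0"
    and y: "y > 0" "s * \<phi> y \<le> 1"
  shows "orlicz_norm M \<phi> (indicator A) \<le> 1 / y"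
proof (rule norm_le)
  have "(\<integral>\<^sup>+ x. ennreal (\<phi> (\<bar>indicator A x :: real\<bar> / (1 / y))) \<partial>M) = ennreal (\<phi> (1 / (1 / y))) * ennreal s"
    using ind_integral[OF phi A(1), of "1 / y"] y A by simp
  also have "\<dots> = ennreal (s * \<phi> y)" using y A(3) phi_props(2)[OF phi, of y] by (simp add: ennreal_mult mult.commute)
  also have "\<dots> \<le> 1" using y by simp
  finally show "1 / y \<in> nset M \<phi> (indicator A)" unfolding nset_def using y by simp
qed

lemma ind_norm_lower:
  assumes phi: "orlicz_function \<phi>" and A: "A \<in> sets M" "emeasure M A = ennreal s" "s \<ge> 0"
    and y: "y > 0" "s * \<phi> y > 1"
  shows "orlicz_norm M \<phi> (indicator A) \<ge> 1 / y"
  unfolding orlicz_norm_nset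
proof (rule cInf_greatest)
  show "nset M \<phi> (indicator A) \<noteq> {}" using A by (intro nset_nonempty[OF phi] ind_space[OF phi]) auto
  fix e assume e: "e \<in> nset M \<phi> (indicator A)"
  then have e0: "e > 0" by (simp add: nset_def)
  have "ennreal (\<phi> (1 / e)) * ennreal s \<le> 1"
    using e ind_integral[OF phi A(1) e0] A(2) by (simp add: nset_def)
  then have "ennreal (\<phi> (1 / e) * s) \<le> 1" using A(3) phi_props(2)[OF phi, of "1/e"] e0 by (simp add: ennreal_mult)
  then have "\<phi> (1 / e) * s \<le> 1" by (simp add: ennreal_le_1)
  then have "\<phi> (1 / e) < \<phi> y" using y(2) A(3)
    by (smt (verit, ccfv_SIG) mult.commute mult_right_mono)
  then have "1 / e < y" using phi_props(3)[OF phi, of y "1/e"] y e0 by force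
  then show "1 / y \<le> e" using e0 y by (simp add: field_simps)
qed

lemma test_lemma:
  fixes n :: nat and A :: "nat \<Rightarrow> 'a set" and \<phi> :: "real \<Rightarrow> real" and s y y' C p :: real
  assumes phi: "orlicz_function \<phi>" and p: "p > 0" and C: "C > 0"
    and UE: "\<forall>n. \<forall>f :: nat \<Rightarrow> 'a \<Rightarrow> real.
      (\<forall>i<n. f i \<in> orlicz_space M \<phi>) \<longrightarrow>
      (\<forall>i<n. \<forall>j<n. i \<noteq> j \<longrightarrow> (\<forall>x. f i x = 0 \<or> f j x = 0)) \<longrightarrow>
      orlicz_norm M \<phi> (\<lambda>x. (\<Sum>i<n. \<bar>f i x\<bar> powr p) powr (1 / p))
        \<le> C * (\<Sum>i<n. orlicz_norm M \<phi> (f i) powr p) powr (1 / p)"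
    and n: "n \<ge> 1" and A: "\<And>i. i < n \<Longrightarrow> A i \<in> sets M" "\<And>i. i < n \<Longrightarrow> emeasure M (A i) = ennreal s"
    and s: "s > 0" and disj: "disjoint_family_on A {..<n}"
    and y: "y > 0" "y' > 0" "s * \<phi> y \<le> 1" "n * s * \<phi> y' > 1"
  shows "y \<le> C * n powr (1 / p) * y'"
proof -
  define f where "f i = (indicator (A i) :: 'a \<Rightarrow> real)" for i
  define U where "U = (\<Union>i<n. A i)"
  have fs: "\<forall>i<n. f i \<in> orlicz_space M \<phi>" unfolding f_def using A s by (auto intro!: ind_space[OF phi])
  have fd: "\<forall>i<n. \<forall>j<n. i \<noteq> j \<longrightarrow> (\<forall>x. f i x = 0 \<or> f j x = 0)"
    using disj unfolding f_def disjoint_family_on_def by (auto simp: indicator_def)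
  have F: "(\<lambda>x. (\<Sum>i<n. \<bar>f i x\<bar> powr p) powr (1 / p)) = indicator U"
  proof
    fix x
    have "(\<Sum>i<n. \<bar>f i x\<bar> powr p) = (\<Sum>i<n. indicator (A i) x)"
      unfolding f_def by (intro sum.cong) (auto simp: indicator_def)
    also have "\<dots> = indicator U x"
    proof -
      have "(indicator U x :: real) = (\<Sum>i<n. indicator (A i) x)" unfolding U_def by (rule indicator_UN_disjoint[OF finite_lessThan disj])
      then show ?thesis by simp
    qed
    finally show "(\<Sum>i<n. \<bar>f i x\<bar> powr p) powr (1 / p) = indicator U x" by (simp add: indicator_def)
  qed
  have Us: "U \<in> sets M" unfolding U_def using A by auto
  have "emeasure M U = (\<Sum>i<n. emeasure M (A i))" unfolding U_def
    by (rule sum_emeasure[symmetric]) (use A disj in auto)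
  also have "\<dots> = ennreal (n * s)" using A(2) s by (simp add: ennreal_of_nat_eq_real_of_nat ennreal_mult sum_ennreal[symmetric])
  finally have mU: "emeasure M U = ennreal (n * s)" .
  have UEf: "orlicz_norm M \<phi> (\<lambda>x. (\<Sum>i<n. \<bar>f i x\<bar> powr p) powr (1 / p))
        \<le> C * (\<Sum>i<n. orlicz_norm M \<phi> (f i) powr p) powr (1 / p)"
    using mp[OF mp[OF UE[THEN spec[of _ n], THEN spec[of _ f]] fs] fd] .
  have "1 / y' \<le> orlicz_norm M \<phi> (indicator U)"
    using ind_norm_lower[OF phi Us mU] s y by (simp add: mult.assoc)
  also have "\<dots> \<le> C * (\<Sum>i<n. orlicz_norm M \<phi> (f i) powr p) powr (1 / p)"
    using UEf unfolding F .
  also have "\<dots> \<le> C * (n * (1 / y) powr p) powr (1 / p)"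
  proof -
    have "orlicz_norm M \<phi> (f i) powr p \<le> (1 / y) powr p" if "i < n" for i
    proof -
      have a: "0 \<le> orlicz_norm M \<phi> (f i)" using norm_nonneg[OF phi] fs that by auto
      have b: "orlicz_norm M \<phi> (f i) \<le> 1 / y" unfolding f_def
        by (rule ind_norm_upper[OF phi A(1)[OF that] A(2)[OF that]]) (use s y in auto)
      show ?thesis using powr_mono2[OF _ a b, of p] p by simp
    qed
    then have "(\<Sum>i<n. orlicz_norm M \<phi> (f i) powr p) \<le> (\<Sum>i<n. (1 / y) powr p)"
      by (intro sum_mono) simp
    then have le: "(\<Sum>i<n. orlicz_norm M \<phi> (f i) powr p) \<le> n * (1 / y) powr p" by simp
    have nn: "0 \<le> (\<Sum>i<n. orlicz_norm M \<phi> (f i) powr p)" by (intro sum_nonneg) simp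
    have "(\<Sum>i<n. orlicz_norm M \<phi> (f i) powr p) powr (1 / p) \<le> (n * (1 / y) powr p) powr (1 / p)"
      by (rule powr_mono2[OF _ nn le]) (use p in simp)
    then show ?thesis using C by (intro mult_left_mono) auto
  qed
  also have "\<dots> = C * n powr (1 / p) * (1 / y)"
    using p y by (simp add: powr_mult powr_powr)
  finally have "1 / y' \<le> C * n powr (1 / p) / y" by simp
  then show ?thesis using y by (simp add: field_simps)
qed

lemma delta_arith:
  fixes \<phi> :: "real \<Rightarrow> real" and n :: nat
  assumes C: "C > 0" and p: "p > 0" and a: "a \<ge> 1" and u: "u > 0" and c: "c > 0"
    and nle: "real n * \<phi> u \<le> c * \<phi> (a * u)" and pu: "\<phi> u \<ge> 0"
    and au: "a * u \<le> C * n powr (1 / p) * u"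
  shows "\<phi> (a * u) \<ge> (1 / (c * C powr p)) * a powr p * \<phi> u"
proof -
  have "a \<le> C * n powr (1 / p)" using au u by simp
  then have "a powr p \<le> (C * n powr (1 / p)) powr p" using a p by (intro powr_mono2) auto
  also have "\<dots> = C powr p * n" using C p by (simp add: powr_mult powr_powr)
  finally have ap: "a powr p \<le> C powr p * n" .
  have "a powr p * \<phi> u \<le> C powr p * n * \<phi> u" using ap pu by (rule mult_right_mono)
  also have "\<dots> \<le> C powr p * (c * \<phi> (a * u))" using nle C by (simp add: mult.assoc)
  finally have "a powr p * \<phi> u \<le> (c * C powr p) * \<phi> (a * u)" by (simp add: ac_simps)
  then show ?thesis using c C by (simp add: field_simps)
qed

lemma disjoint_sets:
  fixes n :: nat and s :: real
  assumes na: "nonatomic M" and Y: "Y \<in> sets M" "emeasure M Y < \<infinity>" and s: "s \<ge> 0" and ns: "n * s \<le> measure M Y"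
  shows "\<exists>A. (\<forall>i<n. A i \<in> sets M \<and> A i \<subseteq> Y \<and> emeasure M (A i) = ennreal s) \<and> disjoint_family_on A {..<n}"
  using ns
proof (induction n)
  case 0
  then show ?case by (auto simp: disjoint_family_on_def)
next
  case (Suc n)
  have "n * s \<le> measure M Y" using Suc.prems s by (simp add: algebra_simps)
  then obtain A where A: "\<forall>i<n. A i \<in> sets M \<and> A i \<subseteq> Y \<and> emeasure M (A i) = ennreal s" "disjoint_family_on A {..<n}"
    using Suc.IH by blast
  define U where "U = (\<Union>i<n. A i)"
  have Us: "U \<in> sets M" "U \<subseteq> Y" unfolding U_def using A by auto
  have mA: "measure M (A i) = s" if "i < n" for i using A(1) that s by (simp add: measure_def)
  have "measure M U \<le> (\<Sum>i<n. measure M (A i))" unfolding U_def by (rule measure_UNION_le) (use A in auto)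
  also have "\<dots> = n * s" using mA by simp
  finally have mU: "measure M U \<le> n * s" .
  have Yf: "emeasure M (Y - U) < \<infinity>" using Y Us by (meson Diff_subset emeasure_mono le_less_trans sets.Diff)
  have "measure M (Y - U) = measure M Y - measure M U" using Y Us by (intro measure_Diff) auto
  then have "s \<le> measure M (Y - U)" using mU Suc.prems by (simp add: algebra_simps)
  then obtain B where B: "B \<in> sets M" "B \<subseteq> Y - U" "measure M B = s"
    using sierpinski[OF na, of "Y - U" s] Yf s Y Us by blast
  have Bf: "emeasure M B < \<infinity>" using emeasure_mono[OF B(2), of M] Yf Y Us by (meson le_less_trans sets.Diff)
  have eB: "emeasure M B = ennreal s" using B(3) fin_meas_eq[OF Bf] by simp
  show ?case
  proof (rule exI[of _ "A(n := B)"], rule conjI)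
    show "\<forall>i<Suc n. (A(n := B)) i \<in> sets M \<and> (A(n := B)) i \<subseteq> Y \<and> emeasure M ((A(n := B)) i) = ennreal s"
      using A B eB by (auto simp: less_Suc_eq)
  next
    show "disjoint_family_on (A(n := B)) {..<Suc n}"
      using A(2) B(2) unfolding disjoint_family_on_def U_def by auto
  qed
qed

lemma big_set:
  assumes sf: "sigma_finite_measure M" and inf: "emeasure M (space M) = \<infinity>"
  shows "\<exists>Y\<in>sets M. emeasure M Y < \<infinity> \<and> measure M Y \<ge> T"
proof -
  obtain A :: "nat \<Rightarrow> 'a set" where A: "range A \<subseteq> sets M" "\<Union> (range A) = space M" "\<And>i. emeasure M (A i) \<noteq> \<infinity>" "incseq A"
    using sigma_finite_measure.sigma_finite_incseq[OF sf] by metis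
  have "(SUP i. emeasure M (A i)) = emeasure M (\<Union>i. A i)" using A by (intro SUP_emeasure_incseq) auto
  then have si: "(SUP i. emeasure M (A i)) = \<infinity>" using A(2) inf by simp
  have "ennreal (max T 0) < (SUP i. emeasure M (A i))" unfolding si by simp
  then obtain i where i: "ennreal (max T 0) < emeasure M (A i)" by (auto simp: less_SUP_iff)
  have "emeasure M (A i) = ennreal (measure M (A i))" using A(3) by (simp add: emeasure_eq_ennreal_measure)
  then have "max T 0 < measure M (A i)" using i by (simp add: ennreal_less_iff)
  then show ?thesis using A by (intro bexI[of _ "A i"]) (auto simp: less_top)
qed

lemma le_mult1: "(1::real) \<le> a \<Longrightarrow> 0 \<le> u \<Longrightarrow> u \<le> a * u"
  using mult_right_mono[of 1 a u] by simp

lemma floor_nat_bounds: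
  fixes x :: real assumes "x \<ge> 0"
  shows "x < real (nat \<lfloor>x\<rfloor> + 1)" "real (nat \<lfloor>x\<rfloor> + 1) \<le> x + 1" "real (nat \<lfloor>x\<rfloor>) \<le> x" "x - 1 < real (nat \<lfloor>x\<rfloor>)"
proof -
  have e: "real (nat \<lfloor>x\<rfloor>) = of_int \<lfloor>x\<rfloor>" using assms by simp
  show "x < real (nat \<lfloor>x\<rfloor> + 1)" "real (nat \<lfloor>x\<rfloor> + 1) \<le> x + 1" "real (nat \<lfloor>x\<rfloor>) \<le> x" "x - 1 < real (nat \<lfloor>x\<rfloor>)"
    unfolding of_nat_add e by linarith+
qed

lemma ue_const:
  assumes "upper_p_estimate M \<phi> p"
  obtains C where "C > 0" "\<forall>n. \<forall>f :: nat \<Rightarrow> 'a \<Rightarrow> real.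
      (\<forall>i<n. f i \<in> orlicz_space M \<phi>) \<longrightarrow>
      (\<forall>i<n. \<forall>j<n. i \<noteq> j \<longrightarrow> (\<forall>x. f i x = 0 \<or> f j x = 0)) \<longrightarrow>
      orlicz_norm M \<phi> (\<lambda>x. (\<Sum>i<n. \<bar>f i x\<bar> powr p) powr (1 / p))
        \<le> C * (\<Sum>i<n. orlicz_norm M \<phi> (f i) powr p) powr (1 / p)"
  using assms unfolding upper_p_estimate_def by blast

lemma ue_all:
  fixes M :: "'a measure"
  assumes sf: "sigma_finite_measure M" and na: "nonatomic M" and inf: "emeasure M (space M) = \<infinity>"
    and phi: "orlicz_function \<phi>" and p: "p > 0" and ue: "upper_p_estimate M \<phi> p"
  shows "delta_star All_Args p \<phi>"
proof -
  obtain C where C: "C > 0" and UE: "\<forall>n. \<forall>f :: nat \<Rightarrow> 'a \<Rightarrow> real.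
      (\<forall>i<n. f i \<in> orlicz_space M \<phi>) \<longrightarrow>
      (\<forall>i<n. \<forall>j<n. i \<noteq> j \<longrightarrow> (\<forall>x. f i x = 0 \<or> f j x = 0)) \<longrightarrow>
      orlicz_norm M \<phi> (\<lambda>x. (\<Sum>i<n. \<bar>f i x\<bar> powr p) powr (1 / p))
        \<le> C * (\<Sum>i<n. orlicz_norm M \<phi> (f i) powr p) powr (1 / p)"
    using ue_const[OF ue] by blast
  have "\<forall>a\<ge>1. \<forall>u\<ge>0. \<phi> (a * u) \<ge> (1 / (2 * C powr p)) * a powr p * \<phi> u"
  proof (intro allI impI)
    fix a u :: real assume a: "a \<ge> 1" and u: "u \<ge> 0"
    show "\<phi> (a * u) \<ge> (1 / (2 * C powr p)) * a powr p * \<phi> u"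
    proof (cases "u = 0")
      case True
      then show ?thesis using phi_props(1)[OF phi] by simp
    next
      case False
      then have u0: "u > 0" using u by simp
      define w1 where "w1 = \<phi> u"
      define w2 where "w2 = \<phi> (a * u)"
      have w1: "w1 > 0" unfolding w1_def using phi_props(4)[OF phi, of 0 u] phi_props(1)[OF phi] u0 by simp
      have w12: "w1 \<le> w2" unfolding w1_def w2_def using a u by (intro phi_props(3)[OF phi] le_mult1) auto
      define s where "s = 1 / w2"
      have s: "s > 0" using w1 w12 by (simp add: s_def)
      define n where "n = nat \<lfloor>w2 / w1\<rfloor> + 1"
      have q: "w2 / w1 \<ge> 1" using w1 w12 by simp
      have n1: "w2 / w1 < real n" "real n \<le> w2 / w1 + 1" unfolding n_def using floor_nat_bounds[of "w2/w1"] q by auto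
      have nle: "real n * w1 \<le> 2 * w2" using n1(2) q w1 by (simp add: field_simps)
      obtain Y where Y: "Y \<in> sets M" "emeasure M Y < \<infinity>" "measure M Y \<ge> n * s" using big_set[OF sf inf] by blast
      obtain A where A: "\<forall>i<n. A i \<in> sets M \<and> A i \<subseteq> Y \<and> emeasure M (A i) = ennreal s" "disjoint_family_on A {..<n}"
        using disjoint_sets[OF na Y(1,2), of s n] s Y(3) by auto
      have "a * u \<le> C * n powr (1 / p) * u"
      proof (rule test_lemma[OF phi p C UE, of n A s])
        show "1 \<le> n" by (simp add: n_def)
        show "s * \<phi> (a * u) \<le> 1" using s w12 w1 by (simp add: s_def w2_def)
        have "w2 < real n * w1" using n1(1) w1 by (simp add: field_simps)
        then show "1 < real n * s * \<phi> u" using w1 w12 by (simp add: s_def w1_def field_simps)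
      qed (use A s a u0 in auto)
      then show ?thesis
        using delta_arith[OF C p a u0, where c=2 and n=n and \<phi>=\<phi>] nle w1 by (simp add: w1_def w2_def)
    qed
  qed
  then show ?thesis using C by (auto intro!: exI[of _ "1 / (2 * C powr p)"])
qed

lemma ue_large:
  fixes M :: "'a measure"
  assumes na: "nonatomic M" and fin: "0 < emeasure M (space M)" "emeasure M (space M) < \<infinity>"
    and phi: "orlicz_function \<phi>" and p: "p > 0" and ue: "upper_p_estimate M \<phi> p"
  shows "delta_star Large_Args p \<phi>"
proof -
  obtain C where C: "C > 0" and UE: "\<forall>n. \<forall>f :: nat \<Rightarrow> 'a \<Rightarrow> real.
      (\<forall>i<n. f i \<in> orlicz_space M \<phi>) \<longrightarrow>
      (\<forall>i<n. \<forall>j<n. i \<noteq> j \<longrightarrow> (\<forall>x. f i x = 0 \<or> f j x = 0)) \<longrightarrow>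
      orlicz_norm M \<phi> (\<lambda>x. (\<Sum>i<n. \<bar>f i x\<bar> powr p) powr (1 / p))
        \<le> C * (\<Sum>i<n. orlicz_norm M \<phi> (f i) powr p) powr (1 / p)"
    using ue_const[OF ue] by blast
  define T where "T = measure M (space M)"
  have eT: "emeasure M (space M) = ennreal T" using fin(2) unfolding T_def by (simp add: emeasure_eq_ennreal_measure)
  have T: "T > 0" using fin(1) eT by simp
  obtain v where v: "v > 0" "\<phi> v \<ge> 2 / T" using phi_large[OF phi] by blast
  have main: "\<forall>a\<ge>1. \<forall>u\<ge>v. \<phi> (a * u) \<ge> (1 / (2 * C powr p)) * a powr p * \<phi> u"
  proof (intro allI impI)
    fix a u :: real assume a: "a \<ge> 1" and u: "u \<ge> v"
    then have u0: "u > 0" using v by simp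
    define w1 where "w1 = \<phi> u"
    define w2 where "w2 = \<phi> (a * u)"
    have w1: "w1 > 0" unfolding w1_def using phi_props(4)[OF phi, of 0 u] phi_props(1)[OF phi] u0 by simp
    have w1T: "w1 \<ge> 2 / T" unfolding w1_def using v u phi_props(3)[OF phi, of v u] by simp
    have w12: "w1 \<le> w2" unfolding w1_def w2_def using a u0 by (intro phi_props(3)[OF phi] le_mult1) auto
    define s where "s = 1 / w2"
    have s: "s > 0" using w1 w12 by (simp add: s_def)
    define n where "n = nat \<lfloor>w2 / w1\<rfloor> + 1"
    have q: "w2 / w1 \<ge> 1" using w1 w12 by simp
    have n1: "w2 / w1 < real n" "real n \<le> w2 / w1 + 1" unfolding n_def using floor_nat_bounds[of "w2/w1"] q by auto
    have nle: "real n * w1 \<le> 2 * w2" using n1(2) q w1 by (simp add: field_simps)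
    have "real n * s \<le> (w2 / w1 + 1) / w2" unfolding s_def using n1(2) w1 w12 by (simp add: divide_right_mono)
    also have "\<dots> = 1 / w1 + 1 / w2" using w1 w12 by (simp add: field_simps)
    also have "\<dots> \<le> 2 / w1" using w1 w12 by (simp add: field_simps)
    also have "\<dots> \<le> T" using w1T w1 T by (simp add: field_simps)
    finally have nsT: "real n * s \<le> T" .
    obtain A where A: "\<forall>i<n. A i \<in> sets M \<and> A i \<subseteq> space M \<and> emeasure M (A i) = ennreal s" "disjoint_family_on A {..<n}"
      using disjoint_sets[OF na sets.top fin(2), of s n] s nsT T_def by auto
    have "a * u \<le> C * n powr (1 / p) * u"
    proof (rule test_lemma[OF phi p C UE, of n A s])
      show "1 \<le> n" by (simp add: n_def)
      show "s * \<phi> (a * u) \<le> 1" using s w12 w1 by (simp add: s_def w2_def)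
      have "w2 < real n * w1" using n1(1) w1 by (simp add: field_simps)
      then show "1 < real n * s * \<phi> u" using w1 w12 by (simp add: s_def w1_def field_simps)
    qed (use A s a u0 in auto)
    then show "\<phi> (a * u) \<ge> (1 / (2 * C powr p)) * a powr p * \<phi> u"
      using delta_arith[OF C p a u0, where c=2 and n=n and \<phi>=\<phi>] nle w1 by (simp add: w1_def w2_def)
  qed
  have K: "1 / (2 * C powr p) > 0" using C by simp
  show ?thesis unfolding delta_star.simps using K v(1) main by (meson less_imp_le)
qed

lemma ue_small:
  fixes M :: "'a measure" and g :: "nat \<Rightarrow> 'a"
  assumes cM: "M = count_space (space M)" and g: "bij_betw g UNIV (space M)"
    and phi: "orlicz_function \<phi>" and p: "p > 0" and ue: "upper_p_estimate M \<phi> p"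
  shows "delta_star Small_Args p \<phi>"
proof -
  obtain C where C: "C > 0" and UE: "\<forall>n. \<forall>f :: nat \<Rightarrow> 'a \<Rightarrow> real.
      (\<forall>i<n. f i \<in> orlicz_space M \<phi>) \<longrightarrow>
      (\<forall>i<n. \<forall>j<n. i \<noteq> j \<longrightarrow> (\<forall>x. f i x = 0 \<or> f j x = 0)) \<longrightarrow>
      orlicz_norm M \<phi> (\<lambda>x. (\<Sum>i<n. \<bar>f i x\<bar> powr p) powr (1 / p))
        \<le> C * (\<Sum>i<n. orlicz_norm M \<phi> (f i) powr p) powr (1 / p)"
    using ue_const[OF ue] by blast
  obtain v where v: "v > 0" "\<phi> v \<le> 1 / 2" using phi_small[OF phi, of "1/2"] by auto
  have ginj: "inj g" and gsurj: "g ` UNIV = space M" using g by (auto simp: bij_betw_def)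
  have main: "\<forall>a\<ge>1. \<forall>u\<ge>0. a * u \<le> v \<longrightarrow> \<phi> (a * u) \<ge> (1 / (3 * C powr p)) * a powr p * \<phi> u"
  proof (intro allI impI)
    fix a u :: real assume a: "a \<ge> 1" and u: "u \<ge> 0" and auv: "a * u \<le> v"
    show "\<phi> (a * u) \<ge> (1 / (3 * C powr p)) * a powr p * \<phi> u"
    proof (cases "u = 0")
      case True
      then show ?thesis using phi_props(1)[OF phi] by simp
    next
      case False
      then have u0: "u > 0" using u by simp
      define w1 where "w1 = \<phi> u"
      define w2 where "w2 = \<phi> (a * u)"
      have w1: "w1 > 0" unfolding w1_def using phi_props(4)[OF phi, of 0 u] phi_props(1)[OF phi] u0 by simp
      have w12: "w1 \<le> w2" unfolding w1_def w2_def using a u by (intro phi_props(3)[OF phi] le_mult1) auto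
      have w2h: "w2 \<le> 1 / 2" unfolding w2_def using phi_props(3)[OF phi, of "a*u" v] auv a u0 v by simp
      define m where "m = nat \<lfloor>1 / w2\<rfloor>"
      have iw2: "1 / w2 \<ge> 2" using w2h w1 w12 by (simp add: field_simps)
      have x0: "0 \<le> 1 / w2" using w1 w12 by simp
      have m1: "real m \<le> 1 / w2" "1 / w2 - 1 < real m" unfolding m_def
        by (rule floor_nat_bounds(3)[OF x0], rule floor_nat_bounds(4)[OF x0])
      have mpos: "m \<ge> 1" using m1(2) iw2 by simp
      have mw2: "real m * w2 \<le> 1" using m1(1) w1 w12 by (simp add: field_simps)
      have mlow: "1 / (2 * w2) \<le> real m" using m1(2) iw2 w1 w12 by (simp add: field_simps)
      define n where "n = nat \<lfloor>1 / (real m * w1)\<rfloor> + 1"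
      have n1: "1 / (real m * w1) < real n" "real n \<le> 1 / (real m * w1) + 1"
        unfolding n_def using floor_nat_bounds[of "1 / (real m * w1)"] w1 mpos by auto
      have "1 / (real m * w1) \<le> 2 * w2 / w1"
      proof -
        have "1 / (real m * w1) = (1 / real m) / w1" by simp
        also have "\<dots> \<le> (2 * w2) / w1"
          using mlow w1 w12 mpos by (intro divide_right_mono) (auto simp: field_simps)
        finally show ?thesis .
      qed
      moreover have q1: "1 \<le> w2 / w1" using w1 w12 by simp
      ultimately have "real n \<le> 3 * w2 / w1" using n1(2) by simp
      then have nle: "real n * w1 \<le> 3 * w2" using w1 by (simp add: le_divide_eq)
      define A where "A i = g ` {i * m ..< (i + 1) * m}" for i
      have Asub: "A i \<subseteq> space M" for i unfolding A_def using gsurj by auto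
      have Asets: "A i \<in> sets M" for i using Asub cM by (metis sets_count_space Pow_iff)
      have Acard: "card (A i) = m" for i unfolding A_def using ginj by (simp add: card_image inj_on_subset)
      have Ameas: "emeasure M (A i) = ennreal (real m)" for i
      proof -
        have "emeasure M (A i) = emeasure (count_space (space M)) (A i)" using cM by metis
        also have "\<dots> = of_nat (card (A i))" using Asub by (intro emeasure_count_space_finite) (auto simp: A_def)
        finally show ?thesis using Acard by (simp add: ennreal_of_nat_eq_real_of_nat)
      qed
      have disj: "disjoint_family_on A {..<n}"
      proof (unfold disjoint_family_on_def, intro ballI impI)
        fix i j assume "i \<in> {..<n}" "j \<in> {..<n}" "i \<noteq> j"
        have "{i * m ..< (i + 1) * m} \<inter> {j * m ..< (j + 1) * m} = {}"
        proof (cases "i < j")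
          case True
          then have "(i + 1) * m \<le> j * m" by (intro mult_right_mono) auto
          then show ?thesis by auto
        next
          case False
          then have "(j + 1) * m \<le> i * m" using \<open>i \<noteq> j\<close> by (intro mult_right_mono) auto
          then show ?thesis by auto
        qed
        then show "A i \<inter> A j = {}" unfolding A_def using ginj by (simp add: image_Int[symmetric])
      qed
      have "a * u \<le> C * n powr (1 / p) * u"
      proof (rule test_lemma[OF phi p C UE, of n A "real m"])
        show "1 \<le> n" by (simp add: n_def)
        show "real m * \<phi> (a * u) \<le> 1" using mw2 by (simp add: w2_def)
        have "1 < real n * (real m * w1)" using n1(1) w1 mpos by (simp add: field_simps)
        then show "1 < real n * real m * \<phi> u" by (simp add: w1_def mult.assoc)
      qed (use Asets Ameas disj mpos a u0 in auto)
      then show ?thesis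
        using delta_arith[OF C p a u0, where c=3 and n=n and \<phi>=\<phi>] nle w1 by (simp add: w1_def w2_def)
    qed
  qed
  have K: "1 / (3 * C powr p) > 0" using C by simp
  show ?thesis unfolding delta_star.simps using K v(1) main by meson
qed

lemma conv_core:
  fixes \<psi> :: "real \<Rightarrow> real" and l y :: "'i \<Rightarrow> real"
  assumes I: "finite I" and l: "\<And>i. i \<in> I \<Longrightarrow> l i \<ge> 0" "(\<Sum>i\<in>I. l i) = 1"
    and y: "\<And>i. i \<in> I \<Longrightarrow> y i \<ge> 0" and K: "K > 0"
    and psi0: "\<psi> 0 = 0" and psinn: "\<And>t. t \<ge> 0 \<Longrightarrow> \<psi> t \<ge> 0"
    and H: "\<And>i. i \<in> I \<Longrightarrow> (\<Sum>i\<in>I. l i * y i) > 0 \<Longrightarrow> y i \<ge> (\<Sum>i\<in>I. l i * y i) / 2 \<Longrightarrow>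
          K * (y i / ((\<Sum>i\<in>I. l i * y i) / 2)) * \<psi> ((\<Sum>i\<in>I. l i * y i) / 2) \<le> \<psi> (y i)"
  shows "K * \<psi> ((\<Sum>i\<in>I. l i * y i) / 2) \<le> (\<Sum>i\<in>I. l i * \<psi> (y i))"
proof -
  define m where "m = (\<Sum>i\<in>I. l i * y i)"
  have m0: "m \<ge> 0" unfolding m_def using l y by (intro sum_nonneg) auto
  have rhs0: "(\<Sum>i\<in>I. l i * \<psi> (y i)) \<ge> 0" using l psinn y by (intro sum_nonneg) auto
  show ?thesis
  proof (cases "m = 0")
    case True
    then show ?thesis using rhs0 psi0 unfolding m_def by simp
  next
    case False
    then have mp: "m > 0" using m0 by simp
    define S where "S = {i\<in>I. y i \<ge> m / 2}"
    have SI: "S \<subseteq> I" "finite S" "finite (I - S)" using I by (auto simp: S_def)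
    have "(\<Sum>i\<in>I - S. l i * y i) \<le> (\<Sum>i\<in>I - S. l i * (m / 2))"
      using l by (intro sum_mono mult_left_mono) (auto simp: S_def)
    also have "\<dots> = (m / 2) * (\<Sum>i\<in>I - S. l i)" by (simp add: sum_distrib_left mult.commute)
    also have "\<dots> \<le> (m / 2) * 1"
    proof -
      have "(\<Sum>i\<in>I - S. l i) \<le> (\<Sum>i\<in>I. l i)" using l I by (intro sum_mono2) auto
      then show ?thesis using l(2) mp by (intro mult_left_mono) auto
    qed
    finally have low: "(\<Sum>i\<in>I - S. l i * y i) \<le> m / 2" by simp
    have split: "m = (\<Sum>i\<in>S. l i * y i) + (\<Sum>i\<in>I - S. l i * y i)"
      unfolding m_def using SI I by (metis sum.subset_diff add.commute)
    have Sbig: "(\<Sum>i\<in>S. l i * y i) \<ge> m / 2" using split low by linarith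
    have pm: "\<psi> (m / 2) \<ge> 0" using psinn mp by simp
    have Hs: "K * (y i / (m / 2)) * \<psi> (m / 2) \<le> \<psi> (y i)" if "i \<in> S" for i
      using H[of i] that mp unfolding m_def[symmetric] S_def by auto
    have "K * \<psi> (m / 2) = (K * \<psi> (m / 2) * (2 / m)) * (m / 2)" using mp by simp
    also have "\<dots> \<le> (K * \<psi> (m / 2) * (2 / m)) * (\<Sum>i\<in>S. l i * y i)"
      by (rule mult_left_mono[OF Sbig]) (use K pm mp in simp)
    also have "\<dots> = (\<Sum>i\<in>S. l i * (K * (y i / (m / 2)) * \<psi> (m / 2)))"
      by (simp add: sum_distrib_left sum_divide_distrib field_simps)
    also have "\<dots> \<le> (\<Sum>i\<in>S. l i * \<psi> (y i))"
      using Hs l SI by (intro sum_mono mult_left_mono) auto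
    also have "\<dots> \<le> (\<Sum>i\<in>I. l i * \<psi> (y i))"
      using SI I l psinn y by (intro sum_mono2) auto
    finally show ?thesis unfolding m_def .
  qed
qed

definition KEY :: "'a measure \<Rightarrow> (real \<Rightarrow> real) \<Rightarrow> real \<Rightarrow> real \<Rightarrow> bool" where
  "KEY M \<phi> p c \<longleftrightarrow> (\<forall>n (f :: nat \<Rightarrow> 'a \<Rightarrow> real) \<epsilon>. n > 0 \<longrightarrow>
     (\<forall>i<n. f i \<in> orlicz_space M \<phi> \<and> \<epsilon> i > 0 \<and> (\<integral>\<^sup>+ x. ennreal (\<phi> (\<bar>f i x\<bar> / \<epsilon> i)) \<partial>M) \<le> 1) \<longrightarrow>
     (\<integral>\<^sup>+ x. ennreal (\<phi> (c * (\<Sum>i<n. \<bar>f i x\<bar> powr p) powr (1 / p) / (\<Sum>i<n. \<epsilon> i powr p) powr (1 / p))) \<partial>M) \<le> 1)"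

lemma zero_norm:
  assumes "\<And>x. g x = 0" "orlicz_function \<phi>"
  shows "orlicz_norm M \<phi> g = 0"
proof -
  have "nset M \<phi> g = {0<..}" unfolding nset_def using assms phi_props(1)[OF assms(2)] by auto
  then show ?thesis unfolding orlicz_norm_nset by simp
qed

lemma pc_from_key:
  fixes M :: "'a measure"
  assumes phi: "orlicz_function \<phi>" and p: "p > 0" and c: "c > 0" and key: "KEY M \<phi> p c"
  shows "p_convex M \<phi> p"
  unfolding p_convex_def
proof (intro exI[of _ "1 / c"] conjI allI impI)
  show "1 / c > 0" using c by simp
  fix n and f :: "nat \<Rightarrow> 'a \<Rightarrow> real"
  assume fs: "\<forall>i<n. f i \<in> orlicz_space M \<phi>"
  define F where "F x = (\<Sum>i<n. \<bar>f i x\<bar> powr p) powr (1 / p)" for x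
  define N where "N i = orlicz_norm M \<phi> (f i)" for i
  have N0: "N i \<ge> 0" if "i < n" for i unfolding N_def using fs that by (intro norm_nonneg[OF phi]) auto
  show "orlicz_norm M \<phi> (\<lambda>x. (\<Sum>i<n. \<bar>f i x\<bar> powr p) powr (1 / p))
        \<le> 1 / c * (\<Sum>i<n. orlicz_norm M \<phi> (f i) powr p) powr (1 / p)"
  proof (cases "n = 0")
    case True
    then show ?thesis using zero_norm[OF _ phi, of "\<lambda>x. (\<Sum>i<n. \<bar>f i x\<bar> powr p) powr (1 / p)" M] by simp
  next
    case False
    then have n0: "n > 0" by simp
    define g where "g d = 1 / c * (\<Sum>i<n. (N i + d) powr p) powr (1 / p)" for d
    have bound: "orlicz_norm M \<phi> F \<le> g d" if d: "d > 0" for d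
    proof -
      define \<epsilon> where "\<epsilon> i = N i + d" for i
      have ep: "\<epsilon> i > 0" if "i < n" for i using N0[OF that] d by (simp add: \<epsilon>_def)
      have ei: "(\<integral>\<^sup>+ x. ennreal (\<phi> (\<bar>f i x\<bar> / \<epsilon> i)) \<partial>M) \<le> 1" if "i < n" for i
      proof -
        have "\<epsilon> i \<in> nset M \<phi> (f i)" unfolding \<epsilon>_def N_def using fs that d by (intro above_norm[OF phi]) auto
        then show ?thesis by (simp add: nset_def)
      qed
      define E where "E = (\<Sum>i<n. \<epsilon> i powr p) powr (1 / p)"
      have epp: "0 < \<epsilon> i powr p" if "i \<in> {..<n}" for i using ep[of i] that by simp
      have Epos: "(\<Sum>i<n. \<epsilon> i powr p) > 0" using n0 by (intro sum_pos epp) auto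
      then have E: "E > 0" by (simp add: E_def)
      have "(\<integral>\<^sup>+ x. ennreal (\<phi> (c * F x / E)) \<partial>M) \<le> 1"
        using key fs ep ei n0 unfolding KEY_def F_def E_def by blast
      moreover have "\<phi> (c * F x / E) = \<phi> (\<bar>F x\<bar> / (E / c))" for x
        using c E by (simp add: F_def field_simps)
      ultimately have "E / c \<in> nset M \<phi> F" unfolding nset_def using E c by simp
      then have "orlicz_norm M \<phi> F \<le> E / c" by (rule norm_le)
      then show ?thesis by (simp add: g_def E_def \<epsilon>_def)
    qed
    have ev: "\<forall>\<^sub>F d in at_right (0::real). 0 < d" by (rule eventually_at_right_less)
    have inner: "((\<lambda>d. (N i + d) powr p) \<longlongrightarrow> (N i + 0) powr p) (at_right 0)" if i: "i \<in> {..<n}" for i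
    proof (rule tendsto_powr')
      show "((\<lambda>d. N i + d) \<longlongrightarrow> N i + 0) (at_right 0)" by (intro tendsto_intros)
      show "((\<lambda>d. p) \<longlongrightarrow> p) (at_right 0)" by simp
      show "N i + 0 \<noteq> 0 \<or> 0 < p \<and> (\<forall>\<^sub>F d in at_right 0. 0 \<le> N i + d)"
        using p N0[of i] i by (auto intro: eventually_mono[OF ev])
    qed
    have sumlim: "((\<lambda>d. \<Sum>i<n. (N i + d) powr p) \<longlongrightarrow> (\<Sum>i<n. (N i + 0) powr p)) (at_right 0)"
      by (rule tendsto_sum) (rule inner)
    have "((\<lambda>d. (\<Sum>i<n. (N i + d) powr p) powr (1 / p)) \<longlongrightarrow> (\<Sum>i<n. (N i + 0) powr p) powr (1 / p)) (at_right 0)"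
    proof (rule tendsto_powr'[OF sumlim tendsto_const])
      show "(\<Sum>i<n. (N i + 0) powr p) \<noteq> 0 \<or> 0 < 1 / p \<and> (\<forall>\<^sub>F d in at_right 0. 0 \<le> (\<Sum>i<n. (N i + d) powr p))"
      proof -
        have "\<forall>\<^sub>F d in at_right 0. 0 \<le> (\<Sum>i<n. (N i + d) powr p)" by (intro always_eventually allI sum_nonneg) simp
        then show ?thesis using p by simp
      qed
    qed
    then have lim: "(g \<longlongrightarrow> g 0) (at_right 0)" unfolding g_def by (intro tendsto_mult_left)
    have "orlicz_norm M \<phi> F \<le> g 0"
      by (rule tendsto_le[OF _ lim tendsto_const]) (auto intro: eventually_mono[OF ev] bound)
    then show ?thesis by (simp add: g_def N_def F_def[abs_def])
  qed
qed

lemma powr_inv_cancel: "p > 0 \<Longrightarrow> z \<ge> 0 \<Longrightarrow> (z powr p) powr (1 / p) = (z::real)"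
  by (cases "z = 0") (auto simp: powr_powr)

lemma psiH:
  fixes \<phi> :: "real \<Rightarrow> real"
  assumes p: "p > 0" and z: "z \<ge> 0" and t: "t > 0" "t \<le> z powr p"
    and D: "\<And>a. a \<ge> 1 \<Longrightarrow> a * t powr (1 / p) = z \<Longrightarrow> K * a powr p * \<phi> (t powr (1 / p)) \<le> \<phi> (a * t powr (1 / p))"
  shows "K * (z powr p / t) * \<phi> (t powr (1 / p)) \<le> \<phi> z"
proof -
  define u where "u = t powr (1 / p)"
  have u: "u > 0" using t by (simp add: u_def)
  have "u \<le> (z powr p) powr (1 / p)" unfolding u_def using t p by (intro powr_mono2) auto
  then have uz: "u \<le> z" using powr_inv_cancel[OF p z] by simp
  define a where "a = z / u"
  have a: "a \<ge> 1" using uz u by (simp add: a_def)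
  have au: "a * u = z" using u by (simp add: a_def)
  have ap: "a powr p = z powr p / t"
    unfolding a_def u_def using t p by (simp add: powr_divide powr_powr)
  show ?thesis using D[OF a] au ap by (simp add: u_def)
qed

lemma shrink:
  fixes \<phi> :: "real \<Rightarrow> real"
  assumes p: "p > 0" and K: "K > 0" "K \<le> 1" and t: "t \<ge> 0"
    and D: "\<And>a u. a \<ge> 1 \<Longrightarrow> u \<ge> 0 \<Longrightarrow> a * u = t powr (1 / p) \<Longrightarrow> \<phi> (a * u) \<ge> K * a powr p * \<phi> u"
  shows "\<phi> ((K^2 * t) powr (1 / p)) \<le> K * \<phi> (t powr (1 / p))"
proof -
  define a where "a = (1 / K^2) powr (1 / p)"
  define u where "u = (K^2 * t) powr (1 / p)"
  have K2: "1 / K^2 \<ge> 1" using K by (simp add: power_le_one)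
  have a: "a \<ge> 1" unfolding a_def using K2 p by (simp add: ge_one_powr_ge_zero)
  have au: "a * u = t powr (1 / p)" unfolding a_def u_def using K t by (simp add: powr_mult[symmetric])
  have ap: "a powr p = 1 / K^2" unfolding a_def using K p by (simp add: powr_powr)
  have "\<phi> (t powr (1 / p)) \<ge> K * (1 / K^2) * \<phi> u" using D[OF a _ au] au ap by (simp add: u_def)
  then have "\<phi> u \<le> K * \<phi> (t powr (1 / p))" using K by (simp add: power2_eq_square field_simps)
  then show ?thesis by (simp add: u_def)
qed

lemma pw_gen:
  fixes \<phi> :: "real \<Rightarrow> real" and l z :: "nat \<Rightarrow> real" and n :: nat
  assumes phi: "orlicz_function \<phi>" and p: "p > 0" and K: "K > 0" "K \<le> 1"
    and D: "\<And>a u. a \<ge> 1 \<Longrightarrow> u \<ge> 0 \<Longrightarrow> a * u \<le> B \<Longrightarrow> \<phi> (a * u) \<ge> K * a powr p * \<phi> u"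
    and l: "\<And>i. i < n \<Longrightarrow> l i \<ge> 0" "(\<Sum>i<n. l i) = 1"
    and z: "\<And>i. i < n \<Longrightarrow> 0 \<le> z i" "\<And>i. i < n \<Longrightarrow> z i \<le> B"
  shows "\<phi> ((K^2 * ((\<Sum>i<n. l i * z i powr p) / 2)) powr (1 / p)) \<le> (\<Sum>i<n. l i * \<phi> (z i))"
proof -
  define m where "m = (\<Sum>i<n. l i * z i powr p)"
  have n0: "n > 0" using l(2) by (cases n) auto
  have B0: "B \<ge> 0" using z[of 0] n0 by linarith
  have m0: "m \<ge> 0" unfolding m_def using l by (intro sum_nonneg) auto
  have "m \<le> (\<Sum>i<n. l i * B powr p)" unfolding m_def
    using l z p by (intro sum_mono mult_left_mono powr_mono2) auto
  also have "\<dots> = B powr p" using l(2) by (simp add: sum_distrib_right[symmetric])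
  finally have mB: "m \<le> B powr p" .
  have c: "K * (\<lambda>t. \<phi> (t powr (1 / p))) ((\<Sum>i\<in>{..<n}. l i * z i powr p) / 2)
     \<le> (\<Sum>i\<in>{..<n}. l i * (\<lambda>t. \<phi> (t powr (1 / p))) (z i powr p))"
  proof (rule conv_core[where \<psi>="\<lambda>t. \<phi> (t powr (1 / p))" and y="\<lambda>i. z i powr p"])
    show "finite {..<n}" by simp
    show "\<And>i. i \<in> {..<n} \<Longrightarrow> 0 \<le> l i" using l by auto
    show "(\<Sum>i\<in>{..<n}. l i) = 1" using l by simp
    show "\<And>i. i \<in> {..<n} \<Longrightarrow> 0 \<le> z i powr p" by simp
    show "K > 0" by fact
    show "\<phi> (0 powr (1 / p)) = 0" using phi_props(1)[OF phi] by simp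
    show "\<And>t. 0 \<le> t \<Longrightarrow> 0 \<le> \<phi> (t powr (1 / p))" using phi_props(2)[OF phi] by simp
    fix i assume i: "i \<in> {..<n}" and mp: "0 < (\<Sum>i\<in>{..<n}. l i * z i powr p)"
      and yi: "(\<Sum>i\<in>{..<n}. l i * z i powr p) / 2 \<le> z i powr p"
    have "K * (z i powr p / (m / 2)) * \<phi> ((m / 2) powr (1 / p)) \<le> \<phi> (z i)"
    proof (rule psiH[OF p])
      show "0 \<le> z i" using z i by auto
      show "0 < m / 2" using mp by (simp add: m_def)
      show "m / 2 \<le> z i powr p" using yi by (simp add: m_def)
      fix a :: real assume a: "1 \<le> a" "a * (m / 2) powr (1 / p) = z i"
      then show "K * a powr p * \<phi> ((m / 2) powr (1 / p)) \<le> \<phi> (a * (m / 2) powr (1 / p))"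
        using D[OF a(1), of "(m / 2) powr (1 / p)"] z i by auto
    qed
    then show "K * (z i powr p / ((\<Sum>i\<in>{..<n}. l i * z i powr p) / 2)) * \<phi> (((\<Sum>i\<in>{..<n}. l i * z i powr p) / 2) powr (1 / p))
          \<le> \<phi> ((z i powr p) powr (1 / p))"
      using powr_inv_cancel[OF p, of "z i"] z i by (simp add: m_def)
  qed
  have c2: "K * \<phi> ((m / 2) powr (1 / p)) \<le> (\<Sum>i<n. l i * \<phi> (z i))"
    using c z powr_inv_cancel[OF p] by (simp add: m_def)
  have "\<phi> ((K^2 * (m / 2)) powr (1 / p)) \<le> K * \<phi> ((m / 2) powr (1 / p))"
  proof (rule shrink[OF p K])
    show "0 \<le> m / 2" using m0 by simp
    fix a u :: real assume a: "1 \<le> a" "0 \<le> u" "a * u = (m / 2) powr (1 / p)"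
    have "(m / 2) powr (1 / p) \<le> (B powr p) powr (1 / p)" using mB m0 p by (intro powr_mono2) auto
    then have "a * u \<le> B" using a(3) powr_inv_cancel[OF p B0] by simp
    then show "K * a powr p * \<phi> u \<le> \<phi> (a * u)" using D[OF a(1,2)] by simp
  qed
  then show ?thesis using c2 by (simp add: m_def)
qed

lemma pw_large:
  fixes \<phi> :: "real \<Rightarrow> real" and l z :: "nat \<Rightarrow> real" and n :: nat
  assumes phi: "orlicz_function \<phi>" and p: "p > 0" and K: "K > 0" and v: "v \<ge> 0"
    and D: "\<And>a u. a \<ge> 1 \<Longrightarrow> u \<ge> v \<Longrightarrow> \<phi> (a * u) \<ge> K * a powr p * \<phi> u"
    and l: "\<And>i. i < n \<Longrightarrow> l i \<ge> 0" "(\<Sum>i<n. l i) = 1"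
    and z: "\<And>i. i < n \<Longrightarrow> 0 \<le> z i"
  shows "\<phi> (((\<Sum>i<n. l i * z i powr p) / 2) powr (1 / p)) \<le> (1 / K) * (\<Sum>i<n. l i * \<phi> (z i)) + \<phi> v"
proof -
  define m where "m = (\<Sum>i<n. l i * z i powr p)"
  have m0: "m \<ge> 0" unfolding m_def using l by (intro sum_nonneg) auto
  have S0: "(\<Sum>i<n. l i * \<phi> (z i)) \<ge> 0" using l z phi_props(2)[OF phi] by (intro sum_nonneg) auto
  have pv: "\<phi> v \<ge> 0" using phi_props(2)[OF phi] v by simp
  show ?thesis
  proof (cases "(m / 2) powr (1 / p) \<ge> v")
    case False
    then have "\<phi> ((m / 2) powr (1 / p)) \<le> \<phi> v" using m0 by (intro phi_props(3)[OF phi]) auto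
    moreover have "0 \<le> (1 / K) * (\<Sum>i<n. l i * \<phi> (z i))" using S0 K by simp
    ultimately show ?thesis by (simp add: m_def)
  next
    case True
    have c: "K * (\<lambda>t. \<phi> (t powr (1 / p))) ((\<Sum>i\<in>{..<n}. l i * z i powr p) / 2)
       \<le> (\<Sum>i\<in>{..<n}. l i * (\<lambda>t. \<phi> (t powr (1 / p))) (z i powr p))"
    proof (rule conv_core[where \<psi>="\<lambda>t. \<phi> (t powr (1 / p))" and y="\<lambda>i. z i powr p"])
      show "finite {..<n}" by simp
      show "\<And>i. i \<in> {..<n} \<Longrightarrow> 0 \<le> l i" using l by auto
      show "(\<Sum>i\<in>{..<n}. l i) = 1" using l by simp
      show "\<And>i. i \<in> {..<n} \<Longrightarrow> 0 \<le> z i powr p" by simp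
      show "K > 0" by fact
      show "\<phi> (0 powr (1 / p)) = 0" using phi_props(1)[OF phi] by simp
      show "\<And>t. 0 \<le> t \<Longrightarrow> 0 \<le> \<phi> (t powr (1 / p))" using phi_props(2)[OF phi] by simp
      fix i assume i: "i \<in> {..<n}" and mp: "0 < (\<Sum>i\<in>{..<n}. l i * z i powr p)"
        and yi: "(\<Sum>i\<in>{..<n}. l i * z i powr p) / 2 \<le> z i powr p"
      have "K * (z i powr p / (m / 2)) * \<phi> ((m / 2) powr (1 / p)) \<le> \<phi> (z i)"
      proof (rule psiH[OF p])
        show "0 \<le> z i" using z i by auto
        show "0 < m / 2" using mp by (simp add: m_def)
        show "m / 2 \<le> z i powr p" using yi by (simp add: m_def)
        fix a :: real assume a: "1 \<le> a" "a * (m / 2) powr (1 / p) = z i"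
        show "K * a powr p * \<phi> ((m / 2) powr (1 / p)) \<le> \<phi> (a * (m / 2) powr (1 / p))"
          using D[OF a(1) True] by simp
      qed
      then show "K * (z i powr p / ((\<Sum>i\<in>{..<n}. l i * z i powr p) / 2)) * \<phi> (((\<Sum>i\<in>{..<n}. l i * z i powr p) / 2) powr (1 / p))
            \<le> \<phi> ((z i powr p) powr (1 / p))"
        using powr_inv_cancel[OF p, of "z i"] z i by (simp add: m_def)
    qed
    have c2: "K * \<phi> ((m / 2) powr (1 / p)) \<le> (\<Sum>i<n. l i * \<phi> (z i))"
      using c z powr_inv_cancel[OF p] by (simp add: m_def)
    then have "\<phi> ((m / 2) powr (1 / p)) \<le> (1 / K) * (\<Sum>i<n. l i * \<phi> (z i))" using K by (simp add: field_simps)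
    then show ?thesis using pv by (simp add: m_def)
  qed
qed

lemma int_lemma:
  fixes f :: "nat \<Rightarrow> 'a \<Rightarrow> real" and \<epsilon> l :: "nat \<Rightarrow> real" and G :: "'a \<Rightarrow> real"
  assumes phi: "orlicz_function \<phi>" and fm: "\<And>i. i < n \<Longrightarrow> f i \<in> borel_measurable M"
    and ep: "\<And>i. i < n \<Longrightarrow> \<epsilon> i > 0"
    and ei: "\<And>i. i < n \<Longrightarrow> (\<integral>\<^sup>+ x. ennreal (\<phi> (\<bar>f i x\<bar> / \<epsilon> i)) \<partial>M) \<le> 1"
    and l: "\<And>i. i < n \<Longrightarrow> l i \<ge> 0" "(\<Sum>i<n. l i) = 1" and ab: "\<alpha> \<ge> 0" "\<beta> \<ge> 0"
    and G: "\<And>x. x \<in> space M \<Longrightarrow> G x \<le> \<alpha> * (\<Sum>i<n. l i * \<phi> (\<bar>f i x\<bar> / \<epsilon> i)) + \<beta>"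
  shows "(\<integral>\<^sup>+ x. ennreal (G x) \<partial>M) \<le> ennreal \<alpha> + ennreal \<beta> * emeasure M (space M)"
proof -
  define h where "h i x = ennreal (\<phi> (\<bar>f i x\<bar> / \<epsilon> i))" for i x
  have hm: "h i \<in> borel_measurable M" if "i < n" for i
  proof -
    have "(\<lambda>x. \<bar>f i x\<bar> / \<epsilon> i) \<in> borel_measurable M" using fm[OF that] by measurable
    then have "(\<lambda>x. \<phi> (\<bar>f i x\<bar> / \<epsilon> i)) \<in> borel_measurable M"
      using ep[OF that] by (intro phi_meas'[OF phi]) auto
    from measurable_compose[OF this measurable_ennreal] show ?thesis by (simp add: h_def[abs_def])
  qed
  have pn: "\<phi> (\<bar>f i x\<bar> / \<epsilon> i) \<ge> 0" if "i < n" for i x using ep[OF that] phi_props(2)[OF phi] by simp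
  have "(\<integral>\<^sup>+ x. ennreal (G x) \<partial>M) \<le> (\<integral>\<^sup>+ x. ennreal \<alpha> * (\<Sum>i<n. ennreal (l i) * h i x) + ennreal \<beta> \<partial>M)"
  proof (rule nn_integral_mono)
    fix x assume x: "x \<in> space M"
    have s0: "(\<Sum>i<n. l i * \<phi> (\<bar>f i x\<bar> / \<epsilon> i)) \<ge> 0" using l pn by (intro sum_nonneg) auto
    have "ennreal (G x) \<le> ennreal (\<alpha> * (\<Sum>i<n. l i * \<phi> (\<bar>f i x\<bar> / \<epsilon> i)) + \<beta>)" using G[OF x] by (rule ennreal_leI)
    also have "\<dots> = ennreal \<alpha> * ennreal (\<Sum>i<n. l i * \<phi> (\<bar>f i x\<bar> / \<epsilon> i)) + ennreal \<beta>"
      using ab s0 by (simp add: ennreal_plus ennreal_mult)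
    also have "ennreal (\<Sum>i<n. l i * \<phi> (\<bar>f i x\<bar> / \<epsilon> i)) = (\<Sum>i<n. ennreal (l i * \<phi> (\<bar>f i x\<bar> / \<epsilon> i)))"
      by (rule sum_ennreal[symmetric]) (use l pn in auto)
    also have "\<dots> = (\<Sum>i<n. ennreal (l i) * h i x)"
      by (intro sum.cong refl) (use l pn in \<open>auto simp: h_def ennreal_mult\<close>)
    finally show "ennreal (G x) \<le> ennreal \<alpha> * (\<Sum>i<n. ennreal (l i) * h i x) + ennreal \<beta>" .
  qed
  also have "\<dots> = ennreal \<alpha> * (\<Sum>i<n. ennreal (l i) * integral\<^sup>N M (h i)) + ennreal \<beta> * emeasure M (space M)"
  proof -
    have sm: "(\<lambda>x. ennreal (l i) * h i x) \<in> borel_measurable M" if "i \<in> {..<n}" for i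
      using that by (intro borel_measurable_times_ennreal measurable_const hm) auto
    have sm2: "(\<lambda>x. (\<Sum>i<n. ennreal (l i) * h i x)) \<in> borel_measurable M"
      using sm by (rule borel_measurable_sum)
    have "(\<integral>\<^sup>+ x. (\<Sum>i<n. ennreal (l i) * h i x) \<partial>M) = (\<Sum>i<n. \<integral>\<^sup>+ x. ennreal (l i) * h i x \<partial>M)"
      by (rule nn_integral_sum) (rule sm)
    also have "\<dots> = (\<Sum>i<n. ennreal (l i) * integral\<^sup>N M (h i))"
      by (intro sum.cong refl nn_integral_cmult hm) auto
    finally have e1: "(\<integral>\<^sup>+ x. (\<Sum>i<n. ennreal (l i) * h i x) \<partial>M) = (\<Sum>i<n. ennreal (l i) * integral\<^sup>N M (h i))" .
    have "(\<integral>\<^sup>+ x. ennreal \<alpha> * (\<Sum>i<n. ennreal (l i) * h i x) + ennreal \<beta> \<partial>M)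
       = (\<integral>\<^sup>+ x. ennreal \<alpha> * (\<Sum>i<n. ennreal (l i) * h i x) \<partial>M) + (\<integral>\<^sup>+ x. ennreal \<beta> \<partial>M)"
      using sm2 by (intro nn_integral_add) auto
    also have "\<dots> = ennreal \<alpha> * (\<integral>\<^sup>+ x. (\<Sum>i<n. ennreal (l i) * h i x) \<partial>M) + ennreal \<beta> * emeasure M (space M)"
      using sm2 by (simp add: nn_integral_cmult)
    finally show ?thesis unfolding e1 .
  qed
  also have "\<dots> \<le> ennreal \<alpha> * (\<Sum>i<n. ennreal (l i) * 1) + ennreal \<beta> * emeasure M (space M)"
    using ei by (intro add_mono mult_left_mono sum_mono) (auto simp: h_def[abs_def])
  also have "(\<Sum>i<n. ennreal (l i) * 1) = 1" using sum_ennreal[of "{..<n}" l] l by simp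
  finally show ?thesis by simp
qed

lemma F_id:
  fixes f :: "nat \<Rightarrow> 'a \<Rightarrow> real" and \<epsilon> :: "nat \<Rightarrow> real"
  assumes ep: "\<And>i. i < n \<Longrightarrow> \<epsilon> i > 0"
  shows "(\<Sum>i<n. \<bar>f i x\<bar> powr p) powr (1 / p) / (\<Sum>i<n. \<epsilon> i powr p) powr (1 / p)
    = (\<Sum>i<n. (\<epsilon> i powr p / (\<Sum>i<n. \<epsilon> i powr p)) * (\<bar>f i x\<bar> / \<epsilon> i) powr p) powr (1 / p)"
proof -
  define E where "E = (\<Sum>i<n. \<epsilon> i powr p)"
  have eq: "(\<epsilon> i powr p / E) * (\<bar>f i x\<bar> / \<epsilon> i) powr p = \<bar>f i x\<bar> powr p / E" if "i \<in> {..<n}" for i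
    using ep[of i] that by (simp add: powr_divide)
  have "(\<Sum>i<n. (\<epsilon> i powr p / E) * (\<bar>f i x\<bar> / \<epsilon> i) powr p) = (\<Sum>i<n. \<bar>f i x\<bar> powr p / E)"
    by (rule sum.cong[OF refl eq])
  also have "\<dots> = (\<Sum>i<n. \<bar>f i x\<bar> powr p) / E" by (simp add: sum_divide_distrib)
  finally show ?thesis by (simp add: E_def powr_divide)
qed

lemma key_gen:
  fixes M :: "'a measure"
  assumes phi: "orlicz_function \<phi>" and p: "p > 0" and ab: "\<alpha> \<ge> 0" "\<beta> \<ge> 0"
    and tot: "ennreal \<alpha> + ennreal \<beta> * emeasure M (space M) \<le> 1"
    and PW: "\<And>n (f :: nat \<Rightarrow> 'a \<Rightarrow> real) \<epsilon> x. n > 0 \<Longrightarrow>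
       (\<forall>i<n. f i \<in> orlicz_space M \<phi> \<and> \<epsilon> i > 0 \<and> (\<integral>\<^sup>+ x. ennreal (\<phi> (\<bar>f i x\<bar> / \<epsilon> i)) \<partial>M) \<le> 1) \<Longrightarrow> x \<in> space M \<Longrightarrow>
       \<phi> (c * (\<Sum>i<n. (\<epsilon> i powr p / (\<Sum>i<n. \<epsilon> i powr p)) * (\<bar>f i x\<bar> / \<epsilon> i) powr p) powr (1 / p))
         \<le> \<alpha> * (\<Sum>i<n. (\<epsilon> i powr p / (\<Sum>i<n. \<epsilon> i powr p)) * \<phi> (\<bar>f i x\<bar> / \<epsilon> i)) + \<beta>"
  shows "KEY M \<phi> p c"
  unfolding KEY_def
proof (intro allI impI)
  fix n and f :: "nat \<Rightarrow> 'a \<Rightarrow> real" and \<epsilon> :: "nat \<Rightarrow> real"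
  assume n: "n > 0" and H: "\<forall>i<n. f i \<in> orlicz_space M \<phi> \<and> \<epsilon> i > 0 \<and> (\<integral>\<^sup>+ x. ennreal (\<phi> (\<bar>f i x\<bar> / \<epsilon> i)) \<partial>M) \<le> 1"
  define E where "E = (\<Sum>i<n. \<epsilon> i powr p)"
  have ep: "\<And>i. i < n \<Longrightarrow> \<epsilon> i > 0" using H by auto
  have epp: "0 < \<epsilon> i powr p" if "i \<in> {..<n}" for i using ep[of i] that by simp
  have E: "E > 0" unfolding E_def using n by (intro sum_pos epp) auto
  have "(\<integral>\<^sup>+ x. ennreal (\<phi> (c * (\<Sum>i<n. \<bar>f i x\<bar> powr p) powr (1 / p) / (\<Sum>i<n. \<epsilon> i powr p) powr (1 / p))) \<partial>M)
      \<le> ennreal \<alpha> + ennreal \<beta> * emeasure M (space M)"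
  proof (rule int_lemma[OF phi _ _ _ _ _ ab, where l="\<lambda>i. \<epsilon> i powr p / E" and \<epsilon>=\<epsilon> and n=n and f=f])
    show "\<And>i. i < n \<Longrightarrow> f i \<in> borel_measurable M" using H by (auto simp: orlicz_space_def)
    show "\<And>i. i < n \<Longrightarrow> \<epsilon> i > 0" by (rule ep)
    show "\<And>i. i < n \<Longrightarrow> (\<integral>\<^sup>+ x. ennreal (\<phi> (\<bar>f i x\<bar> / \<epsilon> i)) \<partial>M) \<le> 1" using H by auto
    show "\<And>i. i < n \<Longrightarrow> 0 \<le> \<epsilon> i powr p / E" using E by simp
    show "(\<Sum>i<n. \<epsilon> i powr p / E) = 1" using E by (simp add: sum_divide_distrib[symmetric] E_def)
    fix x assume x: "x \<in> space M"
    have "c * (\<Sum>i<n. \<bar>f i x\<bar> powr p) powr (1 / p) / (\<Sum>i<n. \<epsilon> i powr p) powr (1 / p)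
        = c * ((\<Sum>i<n. \<bar>f i x\<bar> powr p) powr (1 / p) / (\<Sum>i<n. \<epsilon> i powr p) powr (1 / p))" by simp
    also have "\<dots> = c * (\<Sum>i<n. (\<epsilon> i powr p / E) * (\<bar>f i x\<bar> / \<epsilon> i) powr p) powr (1 / p)"
      using F_id[OF ep, where f=f and x=x and p=p] by (simp add: E_def)
    finally show "\<phi> (c * (\<Sum>i<n. \<bar>f i x\<bar> powr p) powr (1 / p) / (\<Sum>i<n. \<epsilon> i powr p) powr (1 / p))
        \<le> \<alpha> * (\<Sum>i<n. \<epsilon> i powr p / E * \<phi> (\<bar>f i x\<bar> / \<epsilon> i)) + \<beta>"
      using PW[OF n H x] by (simp add: E_def)
  qed
  then show "(\<integral>\<^sup>+ x. ennreal (\<phi> (c * (\<Sum>i<n. \<bar>f i x\<bar> powr p) powr (1 / p) / (\<Sum>i<n. \<epsilon> i powr p) powr (1 / p))) \<partial>M) \<le> 1"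
    using tot by (rule order_trans)
qed

lemma key_all:
  fixes M :: "'a measure"
  assumes phi: "orlicz_function \<phi>" and p: "p > 0" and K: "K > 0" "K \<le> 1"
    and D: "\<And>a u. a \<ge> 1 \<Longrightarrow> u \<ge> 0 \<Longrightarrow> K * a powr p * \<phi> u \<le> \<phi> (a * u)"
  shows "KEY M \<phi> p ((K^2 / 2) powr (1 / p))"
proof (rule key_gen[OF phi p, where \<alpha>=1 and \<beta>=0])
  show "ennreal 1 + ennreal 0 * emeasure M (space M) \<le> 1" by simp
  fix n and f :: "nat \<Rightarrow> 'a \<Rightarrow> real" and \<epsilon> :: "nat \<Rightarrow> real" and x
  assume n: "n > 0" and H: "\<forall>i<n. f i \<in> orlicz_space M \<phi> \<and> \<epsilon> i > 0 \<and> (\<integral>\<^sup>+ x. ennreal (\<phi> (\<bar>f i x\<bar> / \<epsilon> i)) \<partial>M) \<le> 1"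
  define E where "E = (\<Sum>i<n. \<epsilon> i powr p)"
  define l where "l i = \<epsilon> i powr p / E" for i
  define z where "z i = \<bar>f i x\<bar> / \<epsilon> i" for i
  have ep: "\<And>i. i < n \<Longrightarrow> \<epsilon> i > 0" using H by auto
  have epp: "0 < \<epsilon> i powr p" if "i \<in> {..<n}" for i using ep[of i] that by simp
  have E: "E > 0" unfolding E_def using n by (intro sum_pos epp) auto
  have l: "\<And>i. i < n \<Longrightarrow> l i \<ge> 0" "(\<Sum>i<n. l i) = 1"
    using E by (auto simp: l_def sum_divide_distrib[symmetric] E_def)
  have z0: "0 \<le> z i" if "i < n" for i using ep[OF that] by (simp add: z_def)
  have z1: "z i \<le> (\<Sum>i<n. z i)" if "i < n" for i using that by (intro member_le_sum z0) auto
  note z = z0 z1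
  define m where "m = (\<Sum>i<n. l i * z i powr p)"
  have m0: "m \<ge> 0" unfolding m_def using l z by (intro sum_nonneg) auto
  have "\<phi> ((K^2 * (m / 2)) powr (1 / p)) \<le> (\<Sum>i<n. l i * \<phi> (z i))"
    unfolding m_def by (rule pw_gen[OF phi p K _ l z]) (rule D)
  moreover have "(K^2 / 2) powr (1 / p) * m powr (1 / p) = (K^2 * (m / 2)) powr (1 / p)"
    using m0 by (simp add: powr_mult[symmetric])
  ultimately show "\<phi> ((K^2 / 2) powr (1 / p) * (\<Sum>i<n. \<epsilon> i powr p / (\<Sum>i<n. \<epsilon> i powr p) * (\<bar>f i x\<bar> / \<epsilon> i) powr p) powr (1 / p))
         \<le> 1 * (\<Sum>i<n. \<epsilon> i powr p / (\<Sum>i<n. \<epsilon> i powr p) * \<phi> (\<bar>f i x\<bar> / \<epsilon> i)) + 0"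
    by (simp add: m_def l_def z_def E_def)
qed simp_all

lemma scale_step:
  fixes \<phi> :: "real \<Rightarrow> real"
  assumes phi: "orlicz_function \<phi>" and p: "p > 0" and K: "K > 0" and v: "v \<ge> 0"
    and D: "\<And>a u. a \<ge> 1 \<Longrightarrow> u \<ge> v \<Longrightarrow> K * a powr p * \<phi> u \<le> \<phi> (a * u)"
    and s: "s \<ge> 1" and t: "t \<ge> 1" and G: "G \<ge> 0"
  shows "\<phi> (G / (s * t)) \<le> \<phi> G / (K * s powr p) + \<phi> (v / t)"
proof -
  have Ks: "K * s powr p > 0" using K s by simp
  have pG: "\<phi> G \<ge> 0" "\<phi> (v / t) \<ge> 0" using phi_props(2)[OF phi] G v t by auto
  have gs: "G / s \<ge> 0" using G s by simp
  have sst: "s \<le> s * t" using le_mult1[of t s] s t by (simp add: mult.commute)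
  have gst: "G / (s * t) \<le> G / s"
    by (rule divide_left_mono[OF sst G]) (use s t in simp)
  have m1: "\<phi> (G / (s * t)) \<le> \<phi> (G / s)"
    by (rule phi_props(3)[OF phi _ gst]) (use G s t in simp)
  show ?thesis
  proof (cases "G / s \<ge> v")
    case True
    have "K * s powr p * \<phi> (G / s) \<le> \<phi> (s * (G / s))" using D[OF s True] .
    then have "K * s powr p * \<phi> (G / s) \<le> \<phi> G" using s by simp
    then have "\<phi> (G / s) \<le> \<phi> G / (K * s powr p)" using Ks by (simp add: field_simps)
    then show ?thesis using m1 pG by linarith
  next
    case False
    have "\<phi> (G / (s * t)) \<le> \<phi> (v / t)"
    proof (intro phi_props(3)[OF phi])
      show "0 \<le> G / (s * t)" using G s t by simp
      have "G / (s * t) = (G / s) / t" by simp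
      also have "\<dots> \<le> v / t" using False t by (intro divide_right_mono) auto
      finally show "G / (s * t) \<le> v / t" .
    qed
    moreover have "\<phi> G / (K * s powr p) \<ge> 0" using pG Ks by simp
    ultimately show ?thesis by linarith
  qed
qed

lemma key_large:
  fixes M :: "'a measure"
  assumes phi: "orlicz_function \<phi>" and p: "p > 0" and K: "K > 0" and v: "v \<ge> 0"
    and D: "\<And>a u. a \<ge> 1 \<Longrightarrow> u \<ge> v \<Longrightarrow> K * a powr p * \<phi> u \<le> \<phi> (a * u)"
    and T: "emeasure M (space M) = ennreal T" "T > 0"
  shows "\<exists>c>0. KEY M \<phi> p c"
proof -
  define X where "X = 2 * (1 / K^2 + \<phi> v * T / K)"
  define s where "s = max 1 (X powr (1 / p))"
  have pv: "\<phi> v \<ge> 0" using phi_props(2)[OF phi] v by simp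
  have X: "X > 0" unfolding X_def using K pv T by (simp add: add_pos_nonneg)
  have s1: "s \<ge> 1" by (simp add: s_def)
  have sX: "s powr p \<ge> X"
  proof -
    have "X powr (1 / p) \<le> s" by (simp add: s_def)
    then have "(X powr (1 / p)) powr p \<le> s powr p" using p X by (intro powr_mono2) auto
    then show ?thesis using X p by (simp add: powr_powr)
  qed
  obtain y where y: "y > 0" "\<phi> y \<le> 1 / (2 * T)" using phi_small[OF phi, of "1 / (2 * T)"] T by auto
  define t where "t = max 1 (v / y)"
  have t1: "t \<ge> 1" by (simp add: t_def)
  have vt: "v / t \<le> y"
  proof -
    have "v / y \<le> t" by (simp add: t_def)
    then show ?thesis using y t1 v by (simp add: field_simps)
  qed
  have pvt: "\<phi> (v / t) \<le> 1 / (2 * T)" using phi_props(3)[OF phi, of "v/t" y] vt v t1 y by simp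
  define \<alpha> where "\<alpha> = 1 / (K^2 * s powr p)"
  define \<beta> where "\<beta> = \<phi> v / (K * s powr p) + \<phi> (v / t)"
  have sp: "s powr p > 0" using s1 by simp
  have ab: "\<alpha> \<ge> 0" "\<beta> \<ge> 0" using K sp pv phi_props(2)[OF phi, of "v/t"] v t1 by (auto simp: \<alpha>_def \<beta>_def)
  have "\<alpha> + \<phi> v / (K * s powr p) * T = X / 2 / s powr p"
    using K sp by (simp add: \<alpha>_def X_def field_simps power2_eq_square)
  also have "\<dots> \<le> 1 / 2" using sX X sp by (simp add: field_simps)
  finally have h1: "\<alpha> + \<phi> v / (K * s powr p) * T \<le> 1 / 2" .
  have h2: "\<phi> (v / t) * T \<le> 1 / 2" using pvt T by (simp add: field_simps)
  have bT: "\<beta> * T = \<phi> v / (K * s powr p) * T + \<phi> (v / t) * T" by (simp add: \<beta>_def algebra_simps)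
  have tot: "\<alpha> + \<beta> * T \<le> 1" using h1 h2 bT by linarith
  define c where "c = 1 / (2 powr (1 / p) * s * t)"
  have c: "c > 0" using s1 t1 by (simp add: c_def)
  have "KEY M \<phi> p c"
  proof (rule key_gen[OF phi p ab])
    show "ennreal \<alpha> + ennreal \<beta> * emeasure M (space M) \<le> 1"
      using tot ab T by (simp add: ennreal_mult[symmetric] ennreal_plus[symmetric] del: ennreal_plus)
    fix n and f :: "nat \<Rightarrow> 'a \<Rightarrow> real" and \<epsilon> :: "nat \<Rightarrow> real" and x
    assume n: "n > 0" and H: "\<forall>i<n. f i \<in> orlicz_space M \<phi> \<and> \<epsilon> i > 0 \<and> (\<integral>\<^sup>+ x. ennreal (\<phi> (\<bar>f i x\<bar> / \<epsilon> i)) \<partial>M) \<le> 1"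
    define E where "E = (\<Sum>i<n. \<epsilon> i powr p)"
    define l where "l i = \<epsilon> i powr p / E" for i
    define z where "z i = \<bar>f i x\<bar> / \<epsilon> i" for i
    have ep: "\<And>i. i < n \<Longrightarrow> \<epsilon> i > 0" using H by auto
    have epp: "0 < \<epsilon> i powr p" if "i \<in> {..<n}" for i using ep[of i] that by simp
    have E: "E > 0" unfolding E_def using n by (intro sum_pos epp) auto
    have l: "\<And>i. i < n \<Longrightarrow> l i \<ge> 0" "(\<Sum>i<n. l i) = 1"
      using E by (auto simp: l_def sum_divide_distrib[symmetric] E_def)
    have z: "0 \<le> z i" if "i < n" for i using ep[OF that] by (simp add: z_def)
    define m where "m = (\<Sum>i<n. l i * z i powr p)"
    have m0: "m \<ge> 0" unfolding m_def using l z by (intro sum_nonneg) auto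
    define S where "S = (\<Sum>i<n. l i * \<phi> (z i))"
    have pw: "\<phi> ((m / 2) powr (1 / p)) \<le> (1 / K) * S + \<phi> v"
      unfolding m_def S_def by (rule pw_large[OF phi p K v D l z]) auto
    have "\<phi> ((m / 2) powr (1 / p) / (s * t)) \<le> \<phi> ((m / 2) powr (1 / p)) / (K * s powr p) + \<phi> (v / t)"
      by (rule scale_step[OF phi p K v D s1 t1]) simp_all
    also have "\<dots> \<le> ((1 / K) * S + \<phi> v) / (K * s powr p) + \<phi> (v / t)"
      using pw K sp by (intro add_right_mono divide_right_mono) auto
    also have "\<dots> = \<alpha> * S + \<beta>" using K sp by (simp add: \<alpha>_def \<beta>_def field_simps power2_eq_square)
    finally have fin: "\<phi> ((m / 2) powr (1 / p) / (s * t)) \<le> \<alpha> * S + \<beta>" .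
    have "c * m powr (1 / p) = (m / 2) powr (1 / p) / (s * t)"
      using m0 by (simp add: c_def powr_divide)
    then show "\<phi> (c * (\<Sum>i<n. \<epsilon> i powr p / (\<Sum>i<n. \<epsilon> i powr p) * (\<bar>f i x\<bar> / \<epsilon> i) powr p) powr (1 / p))
         \<le> \<alpha> * (\<Sum>i<n. \<epsilon> i powr p / (\<Sum>i<n. \<epsilon> i powr p) * \<phi> (\<bar>f i x\<bar> / \<epsilon> i)) + \<beta>"
      using fin by (simp add: m_def S_def l_def z_def E_def)
  qed
  then show ?thesis using c by blast
qed

lemma count_point:
  fixes g :: "'a \<Rightarrow> ennreal"
  assumes cM: "M = count_space (space M)" and x: "x \<in> space M" and g: "(\<integral>\<^sup>+ y. g y \<partial>M) \<le> 1"
  shows "g x \<le> 1"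
proof -
  have xs: "{x} \<in> sets M" using x cM by (metis sets_count_space Pow_iff empty_subsetI insert_subset)
  have em: "emeasure M {x} = 1"
  proof -
    have "emeasure M {x} = emeasure (count_space (space M)) {x}" using cM by metis
    also have "\<dots> = of_nat (card {x})" using x by (intro emeasure_count_space_finite) auto
    finally show ?thesis by simp
  qed
  have "g x = (\<integral>\<^sup>+ y. g y * indicator {x} y \<partial>M)" using nn_integral_indicator_singleton[OF xs, of g] em by simp
  also have "\<dots> \<le> (\<integral>\<^sup>+ y. g y \<partial>M)" by (intro nn_integral_mono) (auto simp: indicator_def)
  finally show ?thesis using g by simp
qed

lemma key_small:
  fixes M :: "'a measure"
  assumes phi: "orlicz_function \<phi>" and p: "p > 0" and K: "K > 0" "K \<le> 1" and v: "v > 0"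
    and D: "\<And>a u. a \<ge> 1 \<Longrightarrow> u \<ge> 0 \<Longrightarrow> a * u \<le> v \<Longrightarrow> K * a powr p * \<phi> u \<le> \<phi> (a * u)"
    and cM: "M = count_space (space M)"
  shows "\<exists>c>0. KEY M \<phi> p c"
proof -
  obtain y where y: "y > 0" "\<phi> y \<ge> 2" using phi_large[OF phi, of 2] by auto
  define V where "V = max y v"
  define \<sigma> where "\<sigma> = V / v"
  have V: "V \<ge> v" "V \<ge> y" by (auto simp: V_def)
  have \<sigma>: "\<sigma> \<ge> 1" using V v by (simp add: \<sigma>_def)
  have pV: "\<phi> V \<ge> 2" using phi_props(3)[OF phi, of y V] y V by simp
  define c where "c = (K^2 / 2) powr (1 / p) / \<sigma>"
  have c: "c > 0" using K \<sigma> by (simp add: c_def)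
  have "KEY M \<phi> p c"
  proof (rule key_gen[OF phi p, where \<alpha>=1 and \<beta>=0])
    show "ennreal 1 + ennreal 0 * emeasure M (space M) \<le> 1" by simp
    fix n and f :: "nat \<Rightarrow> 'a \<Rightarrow> real" and \<epsilon> :: "nat \<Rightarrow> real" and x
    assume n: "n > 0" and H: "\<forall>i<n. f i \<in> orlicz_space M \<phi> \<and> \<epsilon> i > 0 \<and> (\<integral>\<^sup>+ x. ennreal (\<phi> (\<bar>f i x\<bar> / \<epsilon> i)) \<partial>M) \<le> 1"
      and x: "x \<in> space M"
    define E where "E = (\<Sum>i<n. \<epsilon> i powr p)"
    define l where "l i = \<epsilon> i powr p / E" for i
    define z where "z i = \<bar>f i x\<bar> / \<epsilon> i" for i
    have ep: "\<And>i. i < n \<Longrightarrow> \<epsilon> i > 0" using H by auto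
    have epp: "0 < \<epsilon> i powr p" if "i \<in> {..<n}" for i using ep[of i] that by simp
    have E: "E > 0" unfolding E_def using n by (intro sum_pos epp) auto
    have l: "\<And>i. i < n \<Longrightarrow> l i \<ge> 0" "(\<Sum>i<n. l i) = 1"
      using E by (auto simp: l_def sum_divide_distrib[symmetric] E_def)
    have z0: "0 \<le> z i" if "i < n" for i using ep[OF that] by (simp add: z_def)
    have zV: "z i \<le> V" if i: "i < n" for i
    proof (rule ccontr)
      assume "\<not> z i \<le> V"
      then have "\<phi> V < \<phi> (z i)" using V v by (intro phi_props(4)[OF phi]) auto
      moreover have "ennreal (\<phi> (z i)) \<le> 1"
        using count_point[OF cM x, of "\<lambda>x. ennreal (\<phi> (\<bar>f i x\<bar> / \<epsilon> i))"] H i by (simp add: z_def)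
      then have "\<phi> (z i) \<le> 1" by (simp add: ennreal_le_1)
      ultimately show False using pV by simp
    qed
    define z' where "z' i = z i / \<sigma>" for i
    have z'0: "0 \<le> z' i" if "i < n" for i using z0[OF that] \<sigma> by (simp add: z'_def)
    have z'v: "z' i \<le> v" if "i < n" for i
    proof -
      have "z i / \<sigma> \<le> V / \<sigma>" using zV[OF that] \<sigma> by (intro divide_right_mono) auto
      moreover have "V / \<sigma> = v" using v V by (simp add: \<sigma>_def)
      ultimately show ?thesis by (simp add: z'_def)
    qed
    have pw: "\<phi> ((K^2 * ((\<Sum>i<n. l i * z' i powr p) / 2)) powr (1 / p)) \<le> (\<Sum>i<n. l i * \<phi> (z' i))"
      by (rule pw_gen[OF phi p K D l z'0 z'v])
    have mono: "(\<Sum>i<n. l i * \<phi> (z' i)) \<le> (\<Sum>i<n. l i * \<phi> (z i))"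
    proof (intro sum_mono mult_left_mono)
      fix i assume i: "i \<in> {..<n}"
      have "z i / \<sigma> \<le> z i" using z0[of i] i \<sigma> by (simp add: divide_le_eq le_mult1 mult.commute)
      then show "\<phi> (z' i) \<le> \<phi> (z i)" using z'0[of i] i by (intro phi_props(3)[OF phi]) (auto simp: z'_def)
      show "0 \<le> l i" using l i by auto
    qed
    define m where "m = (\<Sum>i<n. l i * z i powr p)"
    have m0: "m \<ge> 0" unfolding m_def using l z0 by (intro sum_nonneg) auto
    have "(\<Sum>i<n. l i * z' i powr p) = (\<Sum>i<n. l i * z i powr p / \<sigma> powr p)"
      by (intro sum.cong refl) (simp add: z'_def powr_divide)
    also have "\<dots> = m / \<sigma> powr p" by (simp add: m_def sum_divide_distrib)
    finally have m': "(\<Sum>i<n. l i * z' i powr p) = m / \<sigma> powr p" .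
    have "(K^2 * ((\<Sum>i<n. l i * z' i powr p) / 2)) powr (1 / p) = ((K^2 / 2 * m) / \<sigma> powr p) powr (1 / p)"
      unfolding m' by (simp add: field_simps)
    also have "\<dots> = (K^2 / 2 * m) powr (1 / p) / (\<sigma> powr p) powr (1 / p)" by (rule powr_divide)
    also have "(\<sigma> powr p) powr (1 / p) = \<sigma>" using \<sigma> p by (intro powr_inv_cancel) auto
    also have "(K^2 / 2 * m) powr (1 / p) = (K^2 / 2) powr (1 / p) * m powr (1 / p)"
      by (rule powr_mult)
    finally have eq: "(K^2 * ((\<Sum>i<n. l i * z' i powr p) / 2)) powr (1 / p) = c * m powr (1 / p)"
      by (simp add: c_def)
    show "\<phi> (c * (\<Sum>i<n. \<epsilon> i powr p / (\<Sum>i<n. \<epsilon> i powr p) * (\<bar>f i x\<bar> / \<epsilon> i) powr p) powr (1 / p))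
         \<le> 1 * (\<Sum>i<n. \<epsilon> i powr p / (\<Sum>i<n. \<epsilon> i powr p) * \<phi> (\<bar>f i x\<bar> / \<epsilon> i)) + 0"
      using pw mono eq by (simp add: m_def l_def z_def E_def)
  qed simp_all
  then show ?thesis using c by blast
qed

lemma minK:
  assumes "K * a powr p * \<phi> u \<le> \<phi> (a * u)" "\<phi> u \<ge> (0::real)"
  shows "min K 1 * a powr p * \<phi> u \<le> \<phi> (a * u)"
proof -
  have "min K 1 * (a powr p * \<phi> u) \<le> K * (a powr p * \<phi> u)" using assms(2) by (intro mult_right_mono) auto
  then show ?thesis using assms(1) by (simp add: mult.assoc)
qed

theorem mainTheorem6:
  fixes M :: "'a measure" and \<phi> :: "real \<Rightarrow> real" and p :: real and r :: regime
  assumes "sigma_finite_measure M"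
    and "measure_regime M r"
    and "orlicz_function \<phi>"
    and "0 < p"
    and "lower_index r \<phi> > 0"
  shows "(p_convex M \<phi> p \<longleftrightarrow> upper_p_estimate M \<phi> p) \<and>
         (upper_p_estimate M \<phi> p \<longleftrightarrow> delta_star r p \<phi>)"
proof -
  note sf = assms(1) and mr = assms(2) and phi = assms(3) and p = assms(4)
  have pc_ue: "upper_p_estimate M \<phi> p" if "p_convex M \<phi> p"
    using that unfolding p_convex_def upper_p_estimate_def by blast
  have ue_ds: "delta_star r p \<phi>" if ue: "upper_p_estimate M \<phi> p"
  proof (cases r)
    case All_Args
    then show ?thesis using mr ue_all[OF sf _ _ phi p ue] by auto
  next
    case Large_Args
    then show ?thesis using mr ue_large[OF _ _ _ phi p ue] by auto
  next
    case Small_Args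
    then show ?thesis using mr ue_small[OF _ _ phi p ue] by auto
  qed
  have ds_pc: "p_convex M \<phi> p" if ds: "delta_star r p \<phi>"
  proof (cases r)
    case All_Args
    then obtain K where K: "K > 0" "\<forall>a\<ge>1. \<forall>u\<ge>0. \<phi> (a * u) \<ge> K * a powr p * \<phi> u" using ds by auto
    have D: "min K 1 * a powr p * \<phi> u \<le> \<phi> (a * u)" if "a \<ge> 1" "u \<ge> 0" for a u
      using K that phi_props(2)[OF phi, of u] by (intro minK) auto
    have "KEY M \<phi> p (((min K 1)^2 / 2) powr (1 / p))"
      by (rule key_all[OF phi p _ _ D]) (use K in auto)
    then show ?thesis using K by (intro pc_from_key[OF phi p _]) auto
  next
    case Large_Args
    then obtain K v where K: "K > 0" "v \<ge> 0" "\<forall>a\<ge>1. \<forall>u\<ge>v. \<phi> (a * u) \<ge> K * a powr p * \<phi> u" using ds by auto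
    have fin: "0 < emeasure M (space M)" "emeasure M (space M) < \<infinity>" using mr Large_Args by auto
    define T where "T = measure M (space M)"
    have eT: "emeasure M (space M) = ennreal T" using fin(2) unfolding T_def by (simp add: emeasure_eq_ennreal_measure)
    have T: "T > 0" using fin(1) eT by simp
    obtain c where "c > 0" "KEY M \<phi> p c"
      using key_large[OF phi p K(1,2) _ eT T] K(3) by auto
    then show ?thesis by (intro pc_from_key[OF phi p]) auto
  next
    case Small_Args
    then obtain K v where K: "K > 0" "v > 0" "\<forall>a\<ge>1. \<forall>u\<ge>0. a * u \<le> v \<longrightarrow> \<phi> (a * u) \<ge> K * a powr p * \<phi> u" using ds by auto
    have cM: "M = count_space (space M)" using mr Small_Args by auto
    have D: "min K 1 * a powr p * \<phi> u \<le> \<phi> (a * u)" if "a \<ge> 1" "u \<ge> 0" "a * u \<le> v" for a u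
      using K that phi_props(2)[OF phi, of u] by (intro minK) auto
    obtain c where "c > 0" "KEY M \<phi> p c"
      using key_small[OF phi p _ _ K(2) D cM] K(1) by auto
    then show ?thesis by (intro pc_from_key[OF phi p]) auto
  qed
  show ?thesis using pc_ue ue_ds ds_pc by blast
qed


end
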